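(* Fix an uncountable cardinal $\lambda$. If there is an adequate $\omega_1$-poset, then there are an adequate $\omega$-poset and an adequate $1$-poset.
   Context: For $s=\langle\alpha,\zeta\rangle$ write $\pi(s)=\alpha$, $\rho(s)=\zeta$. An LCS poset is a triple $\mathcal T=\langle T,\preceq,i\rangle$ such that: (1) $\langle T,\preceq\rangle$ is a partial order with $T=\bigcup\{T_\alpha:\alpha<\eta\}$ for a nonzero ordinal $\eta$, each $T_\alpha=\{\alpha\}\times A_\alpha$ with $A_\alpha$ a nonempty set of ordinals; (2) $s\prec t$ implies $\pi(s)<\pi(t)$; (3) if $\alpha<\beta<\eta$ and $t\in T_\beta$ then $\{s\in T_\alpha: s\prec t\}$ is infinite; (4) $i:[T]^2\to[T]^{<\omega}$ with, for all $\{s,t\}$: (a) $v\in i\{s,t\}$ implies $v\preceq s,t$; (b) if $u\preceq s,t$ then $u\preceq v$ for some $v\in i\{s,t\}$. Its cardinal sequence is $\langle|T_\alpha|:\alpha<\eta\rangle$. If $S\subseteq T$ satisfies $i\{s,t\}\subseteq S$ for all $\{s,t\}\in[S]^2$, the restriction $\mathcal T\restriction S$ is $\langle S,\preceq\cap(S\times S), i\restriction[S]^2\rangle$. For a sequence of cardinals $f$, an $f$-skeleton is an LCS poset with $T=\bigcup\{\{\alpha\}\times A_\alpha:\alpha<\eta\}$ and cardinal sequence $f$ such that for each $\alpha<\eta$ there is a countable $O_\alpha\in[A_\alpha]^\omega$ with: $s\prec t$ and $\pi(s)=\alpha$ imply $\rho(s)\in O_\alpha$; (i) if $s,t\in\{\alpha\}\times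 O_\alpha$, $\rho(s)\ne\rho(t)$, then $i\{s,t\}=\emptyset$; (ii) if $\alpha+1<\eta$, $t\in\{\alpha+1\}\times A_{\alpha+1}$ and $s\prec t$, then there is $u\in\{\alpha\}\times O_\alpha$ with $s\preceq u\prec t$. $\langle\kappa\rangle_\alpha$ is the constant sequence of length $\alpha$ with value $\kappa$, and ${}^\frown$ is concatenation. Fix an uncountable cardinal $\lambda$. For an ordinal $\gamma$ let $Y_\gamma = (\gamma\times\omega)\cup(\{\gamma,\gamma+1\}\times\lambda)$, with levels $\{\alpha\}\times\omega$ ($\alpha<\gamma$), $\{\gamma\}\times\lambda$, $\{\gamma+1\}\times\lambda$. Let $\mathbb B^{(\gamma)}_S=\gamma\times\omega$ and, for $\zeta<\lambda$, $\mathbb B^{(\gamma)}_\zeta = \{\gamma\}\times[\omega\cdot\zeta,\omega\cdot\zeta+\omega)\cup\{\langle\gamma+1,\zeta\rangle\}$ (ordinal arithmetic). An adequate $\gamma$-poset is an LCS poset $\langle T,\preceq,i\rangle$ with $T=Y_\gamma$ such that for every $\zeta<\lambda$: (1) if $x\in\mathbb B^{(\gamma)}_\zeta$ with $\pi(x)=\gamma$, then $x\prec\langle\gamma+1,\zeta\rangle$ and $x\not\prec\langle\gamma+1,\xi\rangle$ for all $\xi\ne\zeta$; (2) the restriction of $\mathcal T$ to $\mathbb B^{(\gamma)}_S\cup\mathbb B^{(\gamma)}_\zeta$ is a $\langle\omega\rangle_{\gamma+1}{}^\frown\langle1\rangle$-skeleton. *)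

theory Defs
  imports Main "HOL-Library.Equipollence" "HOL-Library.Countable_Set"
begin

text \<open>Ordinals are modelled as elements of an arbitrary well-ordered type 'o
  (an element x stands for the order type of the set of its predecessors).\<close>

definition ozero :: "'o::wellorder" where
  "ozero = (LEAST x. True)"

definition osucc :: "'o::wellorder \<Rightarrow> 'o" where
  "osucc x = (LEAST y. x < y)"

definition oone :: "'o::wellorder" where
  "oone = osucc ozero"

definition olim0 :: "'o::wellorder \<Rightarrow> bool" where
  "olim0 x \<longleftrightarrow> (\<forall>y<x. osucc y < x)"

definition oomega :: "'o::wellorder" where
  "oomega = (LEAST x. x \<noteq> ozero \<and> olim0 x)"

definition oomega1 :: "'o::wellorder" where
  "oomega1 = (LEAST x. uncountable {y. y < x})"

text \<open>ordinal product omega times zeta, by transfinite recursion: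
  the least zero-or-limit ordinal above all omega times xi, xi < zeta\<close>
definition omega_mult :: "'o::wellorder \<Rightarrow> 'o" where
  "omega_mult = wfrec {(x, y). x < y} (\<lambda>f z. LEAST x. olim0 x \<and> (\<forall>w<z. f w < x))"

definition uncountable_cardinal :: "'o::wellorder \<Rightarrow> bool" where
  "uncountable_cardinal l \<longleftrightarrow> uncountable {y. y < l} \<and> (\<forall>x<l. \<not> ({y. y < x} \<approx> {y. y < l}))"

text \<open>Points are pairs (alpha, zeta); pi = fst, rho = snd.  The partial order is
  a predicate le on points (only relating points of T); i maps two-element sets
  to finite sets.\<close>

definition level :: "('o \<times> 'o) set \<Rightarrow> 'o \<Rightarrow> ('o \<times> 'o) set" where
  "level T a = {s \<in> T. fst s = a}"

definition lev_set :: "('o \<times> 'o) set \<Rightarrow> 'o \<Rightarrow> 'o set" where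
  "lev_set T a = {z. (a, z) \<in> T}"

definition strict :: "('p \<Rightarrow> 'p \<Rightarrow> bool) \<Rightarrow> 'p \<Rightarrow> 'p \<Rightarrow> bool" where
  "strict le s t \<longleftrightarrow> le s t \<and> s \<noteq> t"

definition LCS_poset ::
  "('o::wellorder \<times> 'o) set \<Rightarrow> ('o \<times> 'o \<Rightarrow> 'o \<times> 'o \<Rightarrow> bool) \<Rightarrow> (('o \<times> 'o) set \<Rightarrow> ('o \<times> 'o) set) \<Rightarrow> bool"
  where
  "LCS_poset T le i \<longleftrightarrow>
     \<comment> \<open>(1) partial order on T; the levels form a nonzero ordinal eta\<close>
     (\<forall>s t. le s t \<longrightarrow> s \<in> T \<and> t \<in> T) \<and>
     (\<forall>s\<in>T. le s s) \<and>
     (\<forall>s t. le s t \<and> le t s \<longrightarrow> s = t) \<and>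
     (\<forall>s t u. le s t \<and> le t u \<longrightarrow> le s u) \<and>
     T \<noteq> {} \<and>
     (\<forall>a b. b \<in> fst ` T \<and> a < b \<longrightarrow> a \<in> fst ` T) \<and>
     \<comment> \<open>(2)\<close>
     (\<forall>s t. strict le s t \<longrightarrow> fst s < fst t) \<and>
     \<comment> \<open>(3)\<close>
     (\<forall>t\<in>T. \<forall>a. a < fst t \<longrightarrow> infinite {s \<in> level T a. strict le s t}) \<and>
     \<comment> \<open>(4)\<close>
     (\<forall>s\<in>T. \<forall>t\<in>T. s \<noteq> t \<longrightarrow>
        finite (i {s, t}) \<and> i {s, t} \<subseteq> T \<and>
        (\<forall>v\<in>i {s, t}. le v s \<and> le v t) \<and>
        (\<forall>u. le u s \<and> le u t \<longrightarrow> (\<exists>v\<in>i {s, t}. le u v)))"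

text \<open>Cardinal sequence: the levels are exactly L (an initial segment of
  ordinals, i.e. eta) and level a has the cardinality of the ordinal f a.\<close>
definition has_cardseq :: "('o::wellorder \<times> 'o) set \<Rightarrow> 'o set \<Rightarrow> ('o \<Rightarrow> 'o) \<Rightarrow> bool" where
  "has_cardseq T L f \<longleftrightarrow> fst ` T = L \<and> (\<forall>a\<in>L. level T a \<approx> {y. y < f a})"

definition skeleton ::
  "'o set \<Rightarrow> ('o \<Rightarrow> 'o) \<Rightarrow> ('o::wellorder \<times> 'o) set \<Rightarrow> ('o \<times> 'o \<Rightarrow> 'o \<times> 'o \<Rightarrow> bool)
     \<Rightarrow> (('o \<times> 'o) set \<Rightarrow> ('o \<times> 'o) set) \<Rightarrow> bool"
  where
  "skeleton L f T le i \<longleftrightarrow>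
     LCS_poset T le i \<and> has_cardseq T L f \<and>
     (\<forall>a\<in>L. \<exists>Oa. Oa \<subseteq> lev_set T a \<and> countable Oa \<and>
        (\<forall>s t. strict le s t \<and> fst s = a \<longrightarrow> snd s \<in> Oa) \<and>
        (\<forall>x\<in>Oa. \<forall>y\<in>Oa. x \<noteq> y \<longrightarrow> i {(a, x), (a, y)} = {}) \<and>
        (osucc a \<in> L \<longrightarrow>
           (\<forall>t \<in> level T (osucc a). \<forall>s. strict le s t \<longrightarrow>
              (\<exists>x\<in>Oa. le s (a, x) \<and> strict le (a, x) t))))"

text \<open>Restriction of (T, le, i) to S: defined when S is closed under i.\<close>
definition closed_under :: "('p set \<Rightarrow> 'p set) \<Rightarrow> 'p set \<Rightarrow> bool" where
  "closed_under i S \<longleftrightarrow> (\<forall>s\<in>S. \<forall>t\<in>S. s \<noteq> t \<longrightarrow> i {s, t} \<subseteq> S)"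

definition restr :: "('p \<Rightarrow> 'p \<Rightarrow> bool) \<Rightarrow> 'p set \<Rightarrow> 'p \<Rightarrow> 'p \<Rightarrow> bool" where
  "restr le S s t \<longleftrightarrow> s \<in> S \<and> t \<in> S \<and> le s t"

definition Y :: "'o::wellorder \<Rightarrow> 'o \<Rightarrow> ('o \<times> 'o) set" where
  "Y l g = {(a, n). a < g \<and> n < oomega} \<union> {(a, z). (a = g \<or> a = osucc g) \<and> z < l}"

definition BS :: "'o::wellorder \<Rightarrow> ('o \<times> 'o) set" where
  "BS g = {(a, n). a < g \<and> n < oomega}"

definition Bz :: "'o::wellorder \<Rightarrow> 'o \<Rightarrow> ('o \<times> 'o) set" where
  "Bz g z = {(g, x) | x. omega_mult z \<le> x \<and> x < omega_mult (osucc z)} \<union> {(osucc g, z)}"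

definition adequate ::
  "'o::wellorder \<Rightarrow> 'o \<Rightarrow> ('o \<times> 'o \<Rightarrow> 'o \<times> 'o \<Rightarrow> bool) \<Rightarrow> (('o \<times> 'o) set \<Rightarrow> ('o \<times> 'o) set) \<Rightarrow> bool"
  where
  "adequate l g le i \<longleftrightarrow>
     LCS_poset (Y l g) le i \<and>
     (\<forall>z<l.
        (\<forall>x\<in>Bz g z. fst x = g \<longrightarrow>
           strict le x (osucc g, z) \<and> (\<forall>w. w \<noteq> z \<longrightarrow> \<not> strict le x (osucc g, w))) \<and>
        closed_under i (BS g \<union> Bz g z) \<and>
        skeleton {a. a \<le> osucc g} (\<lambda>a. if a \<le> g then oomega else oone)
          (BS g \<union> Bz g z) (restr le (BS g \<union> Bz g z)) i)"

end

theory Submission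
  imports Defs
begin

lemma ozero_le[simp]: "ozero \<le> (x::'o::wellorder)"
  unfolding ozero_def by (rule Least_le) simp

lemma osucc_gt: "(x::'o::wellorder) < y \<Longrightarrow> x < osucc x"
  unfolding osucc_def by (rule LeastI)

lemma osucc_le: "(x::'o::wellorder) < y \<Longrightarrow> osucc x \<le> y"
  unfolding osucc_def by (rule Least_le)

lemma less_osucc: "(x::'o::wellorder) < y \<Longrightarrow> z < osucc x \<Longrightarrow> z \<le> x"
  using osucc_le by (metis not_le order.strict_trans2)

definition e :: "nat \<Rightarrow> 'o::wellorder" where "e n = (osucc ^^ n) ozero"

lemma e_0[simp]: "e 0 = ozero" by (simp add: e_def)
lemma e_Suc: "e (Suc n) = osucc (e n)" by (simp add: e_def)


lemma olim0_zero: "olim0 (ozero::'o::wellorder)"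
  unfolding olim0_def by (metis ozero_le not_le)

lemma omega_facts:
  assumes "uncountable (UNIV::'o::wellorder set)"
  shows "(\<forall>n. (e n::'o) < oomega) \<and> {y::'o. y < oomega} = range e \<and> olim0 (oomega::'o) \<and> oomega \<noteq> (ozero::'o)"
proof -
  have "countable (range (e::nat \<Rightarrow> 'o))" by simp
  then have "\<exists>y1 :: 'o. y1 \<notin> range e" using assms by (metis UNIV_eq_I)
  define y0 :: 'o where "y0 = (LEAST y. y \<notin> range e)"
  have y0: "y0 \<notin> range e" unfolding y0_def using \<open>\<exists>y1. _\<close> by (metis LeastI)
  have below: "y < y0 \<Longrightarrow> y \<in> range e" for y unfolding y0_def using not_less_Least by blast
  have nz: "y0 \<noteq> ozero" using y0 by (metis e_0 rangeI)
  have lim: "olim0 y0" unfolding olim0_def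
  proof (intro allI impI)
    fix q assume q: "q < y0"
    then obtain n where n: "q = e n" using below by blast
    have "osucc q \<le> y0" using q osucc_le by blast
    moreover have "osucc q \<noteq> y0" using y0 n e_Suc by (metis rangeI)
    ultimately show "osucc q < y0" by simp
  qed
  have P: "(oomega::'o) \<noteq> ozero \<and> olim0 (oomega::'o)" unfolding oomega_def
    using LeastI[of "\<lambda>x. x \<noteq> ozero \<and> olim0 x" y0] nz lim by blast
  have le: "oomega \<le> y0" unfolding oomega_def by (rule Least_le) (use nz lim in simp)
  have en: "e n < (oomega::'o)" for n
  proof (induction n)
    case 0 then show ?case using P by (metis e_0 ozero_le order.not_eq_order_implies_strict)
  next
    case (Suc n) then show ?case using P unfolding olim0_def by (simp add: e_Suc)
  qed
  have "{y::'o. y < oomega} = range e"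
  proof
    show "{y::'o. y < oomega} \<subseteq> range e" using le below by fastforce
    show "range e \<subseteq> {y::'o. y < oomega}" using en by auto
  qed
  then show ?thesis using en P by blast
qed

lemma e_strict_mono:
  assumes "uncountable (UNIV::'o::wellorder set)"
  shows "strict_mono (e :: nat \<Rightarrow> 'o)"
proof -
  have "(e n::'o) < e (Suc n)" for n
    using omega_facts[OF assms] osucc_gt by (metis e_Suc)
  then show ?thesis by (simp add: strict_mono_Suc_iff)
qed


lemma OM_unfold: "omega_mult (z::'o::wellorder) = (LEAST x. olim0 x \<and> (\<forall>w<z. omega_mult w < x))"
proof -
  have wf: "wf {(x::'o, y). x < y}" by (rule wf)
  show ?thesis
    apply (subst omega_mult_def)
    apply (subst wfrec[OF wf])
    apply (simp add: cut_apply omega_mult_def[symmetric])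
    done
qed


definition Iblk :: "'o::wellorder \<Rightarrow> 'o set" where
  "Iblk z = {x. omega_mult z \<le> x \<and> x < omega_mult (osucc z)}"

lemma OM_zero: "omega_mult (ozero::'o::wellorder) = ozero"
proof -
  have "omega_mult (ozero::'o) \<le> ozero"
    apply (subst OM_unfold) 
    apply (rule Least_le) using olim0_zero ozero_le not_le by blast
  then show ?thesis using ozero_le[of "omega_mult (ozero::'o)"] by simp
qed

lemma OM_b:
  fixes l :: "'o::wellorder"
  assumes "olim0 l \<and> (\<forall>w<z. omega_mult w < l)"
  shows "olim0 (omega_mult z) \<and> (\<forall>w<z. omega_mult w < omega_mult z) \<and> omega_mult z \<le> l"
proof -
  let ?P = "\<lambda>x. olim0 x \<and> (\<forall>w<z. omega_mult w < x)"
  have e: "omega_mult z = (LEAST x. ?P x)" by (rule OM_unfold)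
  show ?thesis unfolding e using LeastI[of ?P l, OF assms] Least_le[of ?P l, OF assms] by blast
qed

lemma covering:
  fixes l :: "'o::wellorder"
  assumes lim: "olim0 l" and A: "\<forall>z<l. \<exists>x. x \<in> Iblk z \<and> x < l"
  shows "\<forall>y<l. \<exists>z<l. y \<in> Iblk z"
proof -
  have a: "omega_mult w < l" if "w < l" for w
    using A that unfolding Iblk_def by fastforce
  have b: "olim0 (omega_mult z) \<and> (\<forall>w<z. omega_mult w < omega_mult z) \<and> omega_mult z \<le> l"
    if "z \<le> l" for z
    apply (rule OM_b) using lim a that by auto
  have c: "w \<le> omega_mult w" if "w \<le> l" for w
    using that
  proof (induction w rule: less_induct)
    case (less w)
    show ?case
    proof (rule ccontr)
      assume "\<not> w \<le> omega_mult w"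
      then have v: "omega_mult w < w" by simp
      then have "omega_mult w \<le> omega_mult (omega_mult w)" using less by simp
      moreover have "omega_mult (omega_mult w) < omega_mult w" using b[OF less.prems] v by blast
      ultimately show False by simp
    qed
  qed
  show ?thesis
  proof (intro allI impI)
    fix y assume yl: "y < l"
    have sy: "osucc y < l" using lim yl unfolding olim0_def by blast
    have "y < osucc y" using osucc_gt yl by blast
    also have "osucc y \<le> omega_mult (osucc y)" using c sy by simp
    finally have ex: "y < omega_mult (osucc y)" .
    define z0 where "z0 = (LEAST z. y < omega_mult z)"
    have z0: "y < omega_mult z0" unfolding z0_def using LeastI ex by metis
    have z0le: "z0 \<le> osucc y" unfolding z0_def using Least_le ex by metis
    have z0l: "z0 < l" using z0le sy by simp
    have min: "w < z0 \<Longrightarrow> omega_mult w \<le> y" for w unfolding z0_def using not_less_Least by (metis not_le)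
    show "\<exists>z<l. y \<in> Iblk z"
    proof (cases "\<exists>w. z0 = osucc w \<and> w < z0")
      case True
      then obtain w where w: "z0 = osucc w" "w < z0" by blast
      have "omega_mult w \<le> y" using min w by blast
      moreover have "w < l" using w z0l by simp
      ultimately show ?thesis using z0 w unfolding Iblk_def by blast
    next
      case False
      have suc: "osucc w < z0" if "w < z0" for w
      proof -
        have "osucc w \<le> z0" using that osucc_le by blast
        moreover have "osucc w \<noteq> z0" using False that by blast
        ultimately show ?thesis by simp
      qed
      have strict: "omega_mult w < y" if "w < z0" for w
      proof -
        have "omega_mult w < omega_mult (osucc w)" using b[of "osucc w"] suc[OF that] z0l osucc_gt[OF that] by auto
        also have "omega_mult (osucc w) \<le> y" using min suc that by blast
        finally show ?thesis .
      qed
      define s where "s = (LEAST x. \<forall>w<z0. omega_mult w < x)"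
      have s1: "\<forall>w<z0. omega_mult w < s" unfolding s_def using LeastI[of "\<lambda>x. \<forall>w<z0. omega_mult w < x" y] strict by blast
      have s2: "s \<le> y" unfolding s_def using Least_le[of "\<lambda>x. \<forall>w<z0. omega_mult w < x" y] strict by blast
      have slim: "olim0 s" unfolding olim0_def
      proof (intro allI impI)
        fix q assume q: "q < s"
        have "\<not> (\<forall>w<z0. omega_mult w < q)" using q unfolding s_def using not_less_Least by blast
        then obtain w where w: "w < z0" "q \<le> omega_mult w" by (auto simp: not_less)
        have "omega_mult w < omega_mult (osucc w)" using b[of "osucc w"] suc[OF w(1)] z0l osucc_gt[OF w(1)] by auto
        then have "q < omega_mult (osucc w)" using w by simp
        then have "osucc q \<le> omega_mult (osucc w)" by (rule osucc_le)
        also have "omega_mult (osucc w) < s" using s1 suc[OF w(1)] by blast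
        finally show "osucc q < s" .
      qed
      have "omega_mult z0 \<le> s"
        apply (subst OM_unfold) apply (rule Least_le) using slim s1 by blast
      then show ?thesis using s2 z0 by simp
    qed
  qed
qed


lemma lim_l:
  fixes l :: "'o::wellorder"
  assumes "uncountable_cardinal l"
  shows "olim0 l"
  unfolding olim0_def
proof (intro allI impI)
  fix y assume yl: "y < l"
  have unc: "uncountable {y. y < l}" using assms unfolding uncountable_cardinal_def by blast
  show "osucc y < l"
  proof (rule ccontr)
    assume "\<not> osucc y < l"
    then have eq: "osucc y = l" using osucc_le[OF yl] by simp
    have iff: "x < l \<longleftrightarrow> x \<le> y" for x
    proof
      assume "x < l" then show "x \<le> y" using less_osucc[OF yl, of x] eq by simp
    next
      assume "x \<le> y" then show "x < l" using yl by simp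
    qed
    have set: "{x. x < l} = insert y {x. x < y}"
      using iff by (auto simp: order.order_iff_strict)
    have "infinite {x. x < y}" using unc set
      using countable_finite finite_insert by metis
    then have "insert y {x. x < y} \<approx> {x. x < y}" by (rule infinite_insert_eqpoll)
    then have "{x. x < y} \<approx> {x. x < l}" unfolding set by (rule eqpoll_sym)
    then show False using assms yl unfolding uncountable_cardinal_def by blast
  qed
qed


lemma countable_empty_less: "countable {y::'o::wellorder. y < ozero}"
  using ozero_le not_le by (metis (mono_tags, lifting) Collect_empty_eq countable_empty)

locale hyp =
  fixes l :: "'o::wellorder" and le :: "'o \<times> 'o \<Rightarrow> 'o \<times> 'o \<Rightarrow> bool" and i :: "('o \<times> 'o) set \<Rightarrow> ('o \<times> 'o) set"
  assumes card: "uncountable_cardinal l" and big: "\<exists>x. l < x" and adq: "adequate l (oomega1::'o) le i"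
begin

abbreviation g :: 'o where "g \<equiv> oomega1"

lemma unc: "uncountable {y. y < l}" using card unfolding uncountable_cardinal_def by blast
lemma uncU: "uncountable (UNIV :: 'o set)" using unc countable_subset[OF subset_UNIV] by blast
lemma lim: "olim0 l" using lim_l card by blast
lemma gl: "g \<le> l" unfolding oomega1_def by (rule Least_le) (rule unc)
lemma g_unc: "uncountable {y. y < g}" unfolding oomega1_def by (rule LeastI) (rule unc)
lemma g_pos: "ozero < g"
proof -
  have "g \<noteq> ozero" using g_unc countable_empty_less by metis
  then show ?thesis by (metis ozero_le order.not_eq_order_implies_strict)
qed
lemma gs: "g < osucc g"
proof -
  obtain x where "l < x" using big by blast
  then have "g < x" using gl by simp
  then show ?thesis by (rule osucc_gt)
qed

lemma LCS: "LCS_poset (Y l g) le i" using adq unfolding adequate_def by (elim conjE)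

lemma le_Y: "le s t \<Longrightarrow> s \<in> Y l g \<and> t \<in> Y l g" using LCS unfolding LCS_poset_def by (elim conjE) blast

lemma adqz: "z < l \<Longrightarrow>
        (\<forall>x\<in>Bz g z. fst x = g \<longrightarrow>
           strict le x (osucc g, z) \<and> (\<forall>w. w \<noteq> z \<longrightarrow> \<not> strict le x (osucc g, w))) \<and>
        closed_under i (BS g \<union> Bz g z) \<and>
        skeleton {a. a \<le> osucc g} (\<lambda>a. if a \<le> g then oomega else oone)
          (BS g \<union> Bz g z) (restr le (BS g \<union> Bz g z)) i"
  using adq unfolding adequate_def by (elim conjE allE impE) auto

lemma blk_Bz: "x \<in> Iblk z \<Longrightarrow> (g, x) \<in> Bz g z" unfolding Iblk_def Bz_def by blast

lemma blk_below: "z < l \<Longrightarrow> x \<in> Iblk z \<Longrightarrow> strict le (g, x) (osucc g, z)"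
  using adqz blk_Bz by fastforce

lemma blk_not: "z < l \<Longrightarrow> x \<in> Iblk z \<Longrightarrow> w \<noteq> z \<Longrightarrow> \<not> strict le (g, x) (osucc g, w)"
  using adqz blk_Bz by fastforce

lemma blk_sub: "z < l \<Longrightarrow> x \<in> Iblk z \<Longrightarrow> x < l"
proof -
  assume "z < l" "x \<in> Iblk z"
  then have "(g, x) \<in> Y l g" using blk_below le_Y unfolding strict_def by blast
  then show "x < l" unfolding Y_def by auto
qed

lemma blk_disj: "z < l \<Longrightarrow> w < l \<Longrightarrow> z \<noteq> w \<Longrightarrow> Iblk z \<inter> Iblk w = {}"
  using blk_below blk_not by blast

lemma level_S_g: "level (BS g \<union> Bz g z) g = (\<lambda>x. (g, x)) ` Iblk z"
  using gs unfolding level_def BS_def Bz_def Iblk_def by auto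

lemma blk_card: "z < l \<Longrightarrow> Iblk z \<approx> {y. y < (oomega::'o)}"
proof -
  assume zl: "z < l"
  have hc: "has_cardseq (BS g \<union> Bz g z) {a. a \<le> osucc g} (\<lambda>a. if a \<le> g then oomega else oone)"
    using adqz[OF zl] unfolding skeleton_def by (elim conjE)
  have gin: "g \<in> {a. a \<le> osucc g}" using gs by simp
  have "level (BS g \<union> Bz g z) g \<approx> {y. y < (if g \<le> g then (oomega::'o) else oone)}"
    using hc gin unfolding has_cardseq_def by (elim conjE) (drule bspec, assumption)
  then have a: "level (BS g \<union> Bz g z) g \<approx> {y. y < (oomega::'o)}" by simp
  have inj: "inj_on (\<lambda>x. (g, x)) (Iblk z)" by (simp add: inj_on_def)
  have b: "level (BS g \<union> Bz g z) g \<approx> Iblk z" unfolding level_S_g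
    by (rule inj_on_image_eqpoll_self[OF inj])
  show ?thesis by (rule eqpoll_trans[OF eqpoll_sym[OF b] a])
qed

lemma omega_inf: "infinite {y. y < (oomega::'o)}"
proof -
  have "{y. y < (oomega::'o)} = range e" using omega_facts[OF uncU] by blast
  moreover have "inj (e :: nat \<Rightarrow> 'o)" using e_strict_mono[OF uncU] strict_mono_imp_inj_on by blast
  ultimately show ?thesis using range_inj_infinite by metis
qed

lemma blk_inf: "z < l \<Longrightarrow> infinite (Iblk z)"
  using blk_card omega_inf eqpoll_finite_iff by blast

lemma cover: "\<forall>y<l. \<exists>z<l. y \<in> Iblk z"
proof (rule covering[OF lim])
  show "\<forall>z<l. \<exists>x. x \<in> Iblk z \<and> x < l"
  proof (intro allI impI)
    fix z assume zl: "z < l"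
    have "Iblk z \<noteq> {}" using blk_inf[OF zl] by auto
    then obtain x where "x \<in> Iblk z" by blast
    then show "\<exists>x. x \<in> Iblk z \<and> x < l" using blk_sub[OF zl] by blast
  qed
qed

end

lemma LCS_inT: assumes "LCS_poset T le i" "le s t" shows "s \<in> T \<and> t \<in> T"
proof -
  have "\<forall>s t. le s t \<longrightarrow> s \<in> T \<and> t \<in> T" using assms(1) unfolding LCS_poset_def by (elim conjE) assumption
  then show ?thesis using assms(2) by blast
qed
lemma LCS_refl: assumes "LCS_poset T le i" "s \<in> T" shows "le s s"
proof -
  have "\<forall>s\<in>T. le s s" using assms(1) unfolding LCS_poset_def by (elim conjE) assumption
  then show ?thesis using assms(2) by blast
qed
lemma LCS_antisym: assumes "LCS_poset T le i" "le s t" "le t s" shows "s = t"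
proof -
  have "\<forall>s t. le s t \<and> le t s \<longrightarrow> s = t" using assms(1) unfolding LCS_poset_def by (elim conjE) assumption
  then show ?thesis using assms(2,3) by blast
qed
lemma LCS_trans: assumes "LCS_poset T le i" "le s t" "le t u" shows "le s u"
proof -
  have "\<forall>s t u. le s t \<and> le t u \<longrightarrow> le s u" using assms(1) unfolding LCS_poset_def by (elim conjE) assumption
  then show ?thesis using assms(2,3) by blast
qed
lemma LCS_strict: assumes "LCS_poset T le i" "strict le s t" shows "fst s < fst t"
proof -
  have "\<forall>s t. strict le s t \<longrightarrow> fst s < fst t" using assms(1) unfolding LCS_poset_def by (elim conjE) assumption
  then show ?thesis using assms(2) by blast
qed
lemma LCS_inf: assumes "LCS_poset T le i" "t \<in> T" "a < fst t" shows "infinite {s \<in> level T a. strict le s t}"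
proof -
  have "\<forall>t\<in>T. \<forall>a. a < fst t \<longrightarrow> infinite {s \<in> level T a. strict le s t}" using assms(1) unfolding LCS_poset_def by (elim conjE) assumption
  then show ?thesis using assms(2,3) by blast
qed
lemma LCS_i4: assumes "LCS_poset T le i" "s \<in> T" "t \<in> T" "s \<noteq> t"
  shows "finite (i {s, t}) \<and> i {s, t} \<subseteq> T \<and>
        (\<forall>v\<in>i {s, t}. le v s \<and> le v t) \<and>
        (\<forall>u. le u s \<and> le u t \<longrightarrow> (\<exists>v\<in>i {s, t}. le u v))"
proof -
  have "\<forall>s\<in>T. \<forall>t\<in>T. s \<noteq> t \<longrightarrow>
        finite (i {s, t}) \<and> i {s, t} \<subseteq> T \<and>
        (\<forall>v\<in>i {s, t}. le v s \<and> le v t) \<and>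
        (\<forall>u. le u s \<and> le u t \<longrightarrow> (\<exists>v\<in>i {s, t}. le u v))" using assms(1) unfolding LCS_poset_def by (elim conjE) assumption
  then show ?thesis using assms(2,3,4) by blast
qed
lemma LCS_ifin: "LCS_poset T le i \<Longrightarrow> s \<in> T \<Longrightarrow> t \<in> T \<Longrightarrow> s \<noteq> t \<Longrightarrow> finite (i {s, t})"
  using LCS_i4 by blast
lemma LCS_ilow: "LCS_poset T le i \<Longrightarrow> s \<in> T \<Longrightarrow> t \<in> T \<Longrightarrow> s \<noteq> t \<Longrightarrow> v \<in> i {s, t} \<Longrightarrow> le v s \<and> le v t"
  using LCS_i4 by blast
lemma LCS_icov: "LCS_poset T le i \<Longrightarrow> s \<in> T \<Longrightarrow> t \<in> T \<Longrightarrow> s \<noteq> t \<Longrightarrow> le u s \<Longrightarrow> le u t \<Longrightarrow> \<exists>v\<in>i {s, t}. le u v"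
  using LCS_i4 by blast

lemma pigeon: assumes "infinite A" "finite B" "f ` A \<subseteq> B" shows "\<exists>x\<in>A. \<exists>y\<in>A. x \<noteq> y \<and> f x = f y"
proof (rule ccontr)
  assume "\<not> ?thesis"
  then have "inj_on f A" unfolding inj_on_def by blast
  moreover have "finite (f ` A)" using assms(2,3) finite_subset by blast
  ultimately show False using assms(1) finite_imageD by blast
qed

context hyp begin

lemma skel_g:
  assumes zl: "z < l"
  shows "\<exists>Oa. (\<forall>s t. strict (restr le (BS g \<union> Bz g z)) s t \<and> fst s = g \<longrightarrow> snd s \<in> Oa) \<and>
        (\<forall>x\<in>Oa. \<forall>y\<in>Oa. x \<noteq> y \<longrightarrow> i {(g, x), (g, y)} = {}) \<and>
        (\<forall>t \<in> level (BS g \<union> Bz g z) (osucc g). \<forall>s. strict (restr le (BS g \<union> Bz g z)) s t \<longrightarrow>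
              (\<exists>x\<in>Oa. restr le (BS g \<union> Bz g z) s (g, x) \<and> strict (restr le (BS g \<union> Bz g z)) (g, x) t))"
proof -
  have sk: "skeleton {a. a \<le> osucc g} (\<lambda>a. if a \<le> g then oomega else oone)
          (BS g \<union> Bz g z) (restr le (BS g \<union> Bz g z)) i" using adqz[OF zl] by (elim conjE)
  have gin: "g \<in> {a. a \<le> osucc g}" using gs by simp
  have sin: "osucc g \<in> {a. a \<le> osucc g}" by simp
  from sk[unfolded skeleton_def] gin sin show ?thesis by (elim conjE) (drule bspec, assumption, blast)
qed

lemma skel_LCS: "z < l \<Longrightarrow> LCS_poset (BS g \<union> Bz g z) (restr le (BS g \<union> Bz g z)) i"
  using adqz unfolding skeleton_def by blast

definition Dz :: "'o \<Rightarrow> nat set" where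
  "Dz z = {n. le (ozero, e n) (osucc g, z)}"

lemma top_Y: "z < l \<Longrightarrow> (osucc g, z) \<in> Y l g" unfolding Y_def by blast
lemma mid_Y: "x < l \<Longrightarrow> (g, x) \<in> Y l g" unfolding Y_def by blast

lemma Dz_inj: "inj_on Dz {z. z < l}"
proof (rule inj_onI, rule ccontr)
  fix z w assume z: "z \<in> {z. z < l}" and w: "w \<in> {z. z < l}" and eqD: "Dz z = Dz w" and ne: "z \<noteq> w"
  have zl: "z < l" and wl: "w < l" using z w by auto
  define tz where "tz = (osucc g, z)"
  define tw where "tw = (osucc g, w)"
  define S where "S = BS g \<union> Bz g z"
  have tzY: "tz \<in> Y l g" and twY: "tw \<in> Y l g" using top_Y zl wl tz_def tw_def by auto
  have tne: "tz \<noteq> tw" using ne tz_def tw_def by simp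
  define W where "W = i {tz, tw}"
  have Wfin: "finite W" unfolding W_def using LCS_ifin[OF LCS tzY twY tne] .
  have Wlow: "v \<in> W \<Longrightarrow> le v tz \<and> le v tw" for v unfolding W_def using LCS_ilow[OF LCS tzY twY tne] by blast
  have vne: "v \<in> W \<Longrightarrow> strict le v tz \<and> strict le v tw" for v
  proof -
    assume vW: "v \<in> W"
    have "v \<noteq> tz"
    proof
      assume "v = tz"
      then have "strict le tz tw" using Wlow[OF vW] tne unfolding strict_def by simp
      then show False using LCS_strict[OF LCS] tz_def tw_def by fastforce
    qed
    moreover have "v \<noteq> tw"
    proof
      assume "v = tw"
      then have "strict le tw tz" using Wlow[OF vW] tne unfolding strict_def by simp
      then show False using LCS_strict[OF LCS] tz_def tw_def by fastforce
    qed
    ultimately show ?thesis using Wlow[OF vW] unfolding strict_def by simp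
  qed
  have vBS: "v \<in> BS g" if vW: "v \<in> W" for v
  proof -
    have vY: "v \<in> Y l g" using Wlow[OF vW] le_Y by blast
    have "fst v < osucc g" using LCS_strict[OF LCS] vne[OF vW] tz_def by fastforce
    then have vle: "fst v \<le> g" using less_osucc gs by blast
    have "fst v \<noteq> g"
    proof
      assume fv: "fst v = g"
      then have "snd v < l" using vY gs unfolding Y_def by auto
      then obtain z' where z': "z' < l" "snd v \<in> Iblk z'" using cover by blast
      have veq: "v = (g, snd v)" using fv by (metis prod.collapse)
      have "z = z'" using blk_not[OF z'] vne[OF vW] veq tz_def by metis
      moreover have "w = z'" using blk_not[OF z'] vne[OF vW] veq tw_def by metis
      ultimately show False using ne by simp
    qed
    then have "fst v < g" using vle by simp
    then show ?thesis using vY gs unfolding Y_def BS_def by auto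
  qed
  obtain Oa where OA: "\<forall>s t. strict (restr le S) s t \<and> fst s = g \<longrightarrow> snd s \<in> Oa"
     and OB: "\<forall>x\<in>Oa. \<forall>y\<in>Oa. x \<noteq> y \<longrightarrow> i {(g, x), (g, y)} = {}"
     and OC: "\<forall>t \<in> level S (osucc g). \<forall>s. strict (restr le S) s t \<longrightarrow>
              (\<exists>x\<in>Oa. restr le S s (g, x) \<and> strict (restr le S) (g, x) t)"
    using skel_g[OF zl] unfolding S_def by blast
  have LS: "LCS_poset S (restr le S) i" using skel_LCS[OF zl] S_def by simp
  have tzS: "tz \<in> level S (osucc g)" unfolding tz_def S_def level_def Bz_def by simp
  have BSS: "BS g \<subseteq> S" unfolding S_def by blast
  have midS: "x \<in> Iblk z \<Longrightarrow> (g, x) \<in> S" for x using blk_Bz S_def by blast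
  \<comment> \<open>each v in W determines the block element above it\<close>
  have key: "x = y" if vW: "v \<in> W" and x: "x \<in> Iblk z" and u: "u \<in> BS g" "le u (g, x)" "le u v"
       and y: "y \<in> Oa" "restr le S v (g, y)" for v x y u
  proof (rule ccontr)
    assume xy: "x \<noteq> y"
    have xO: "x \<in> Oa"
    proof -
      have "strict (restr le S) (g, x) tz"
        using blk_below[OF zl x] midS[OF x] tzS unfolding strict_def restr_def tz_def level_def by auto
      then show ?thesis using OA by fastforce
    qed
    have yS: "(g, y) \<in> S" using y(2) unfolding restr_def by blast
    have "\<exists>v'\<in>i {(g, x), (g, y)}. restr le S u v'"
    proof (rule LCS_icov[OF LS midS[OF x] yS])
      show "(g, x) \<noteq> (g, y)" using xy by simp
      show "restr le S u (g, x)" using u midS[OF x] BSS unfolding restr_def by blast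
      have "le v (g, y)" using y(2) unfolding restr_def by blast
      then have "le u (g, y)" using LCS_trans[OF LCS u(3)] by blast
      then show "restr le S u (g, y)" using u yS BSS unfolding restr_def by blast
    qed
    then show False using OB xO y(1) xy by auto
  qed
  have yv: "\<exists>y. y \<in> Oa \<and> restr le S v (g, y)" if vW: "v \<in> W" for v
  proof -
    have "strict (restr le S) v tz" using vne[OF vW] vBS[OF vW] BSS tzS
      unfolding strict_def restr_def level_def by auto
    then show ?thesis using OC tzS by blast
  qed
  have ex: "\<exists>v u. v \<in> W \<and> u \<in> BS g \<and> le u (g, x) \<and> le u v" if x: "x \<in> Iblk z" for x
  proof -
    have xl: "x < l" using blk_sub[OF zl x] .
    have "infinite {s \<in> level (Y l g) ozero. strict le s (g, x)}"
      using LCS_inf[OF LCS mid_Y[OF xl]] g_pos by simp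
    then obtain u where u: "u \<in> level (Y l g) ozero" "strict le u (g, x)"
      by (metis (no_types, lifting) empty_Collect_eq finite.emptyI)
    have uY: "u \<in> Y l g" and fu: "fst u = ozero" using u(1) unfolding level_def by auto
    have f1: "fst u \<noteq> g" using fu g_pos by simp
    have f2: "fst u \<noteq> osucc g" using fu order.strict_trans[OF g_pos gs] by simp
    have "(fst u < g \<and> snd u < oomega) \<or> ((fst u = g \<or> fst u = osucc g) \<and> snd u < l)"
      using uY unfolding Y_def by (cases u) auto
    then have su: "snd u < oomega" using f1 f2 by blast
    then obtain n where n: "snd u = e n" using omega_facts[OF uncU] by blast
    have ueq: "u = (ozero, e n)" using fu n by (metis prod.collapse)
    have uBS: "u \<in> BS g" using su fu g_pos unfolding BS_def by (cases u) auto
    have "le u tz" using LCS_trans[OF LCS] u(2) blk_below[OF zl x] unfolding strict_def tz_def by blast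
    then have "n \<in> Dz z" unfolding Dz_def tz_def ueq by simp
    then have "n \<in> Dz w" using eqD by simp
    then have "le u tw" unfolding Dz_def tw_def ueq by simp
    then obtain v where "v \<in> W" "le u v" using LCS_icov[OF LCS tzY twY tne \<open>le u tz\<close>] W_def by blast
    then show ?thesis using uBS u(2) unfolding strict_def by blast
  qed
  define V where "V x = (SOME v. \<exists>u. v \<in> W \<and> u \<in> BS g \<and> le u (g, x) \<and> le u v)" for x
  have V: "\<exists>u. V x \<in> W \<and> u \<in> BS g \<and> le u (g, x) \<and> le u (V x)" if "x \<in> Iblk z" for x
    unfolding V_def using someI_ex[OF ex[OF that]] by simp
  have "V ` Iblk z \<subseteq> W" using V by blast
  then obtain x x' where xx: "x \<in> Iblk z" "x' \<in> Iblk z" "x \<noteq> x'" "V x = V x'"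
    using pigeon[OF blk_inf[OF zl] Wfin] by blast
  obtain u where u: "V x \<in> W" "u \<in> BS g" "le u (g, x)" "le u (V x)" using V[OF xx(1)] by blast
  obtain u' where u': "V x' \<in> W" "u' \<in> BS g" "le u' (g, x')" "le u' (V x')" using V[OF xx(2)] by blast
  obtain y where y: "y \<in> Oa" "restr le S (V x) (g, y)" using yv[OF u(1)] by blast
  have "x = y" using key[OF u(1) xx(1) u(2-4) y] .
  moreover have "x' = y" using key[OF u'(1) xx(2) u'(2-4)] y xx(4) by simp
  ultimately show False using xx(3) by simp
qed

end

definition pfx :: "nat set \<Rightarrow> nat \<Rightarrow> bool list" where
  "pfx S n = map (\<lambda>k. k \<in> S) [0..<n]"

lemma pfx_len[simp]: "length (pfx S n) = n" by (simp add: pfx_def)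

lemma pfx_eq: "pfx S n = pfx S' m \<Longrightarrow> n = m \<and> (\<forall>k<n. (k \<in> S) = (k \<in> S'))"
proof -
  assume h: "pfx S n = pfx S' m"
  then have nm: "n = m" using pfx_len by metis
  have "(k \<in> S) = (k \<in> S')" if "k < n" for k
  proof -
    have "pfx S n ! k = pfx S' m ! k" using h by simp
    then show ?thesis using that nm by (simp add: pfx_def)
  qed
  then show ?thesis using nm by blast
qed

context hyp begin

definition Fz :: "'o \<Rightarrow> nat set" where "Fz z = range (\<lambda>n. to_nat (pfx (Dz z) n))"
definition bz :: "'o \<Rightarrow> 'o" where "bz x = (SOME z. z < l \<and> x \<in> Iblk z)"
definition fz :: "'o \<Rightarrow> nat \<Rightarrow> 'o" where "fz z = (SOME f. bij_betw f (UNIV::nat set) (Iblk z))"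
definition idx :: "'o \<Rightarrow> nat" where "idx x = inv_into UNIV (fz (bz x)) x"
definition Qx :: "'o \<Rightarrow> nat set" where
  "Qx x = range (\<lambda>j. to_nat (pfx (Dz (bz x)) (prod_encode (idx x, j))))"

lemma Ffin: assumes zl: "z < l" and wl: "w < l" and ne: "z \<noteq> w" shows "finite (Fz z \<inter> Fz w)"
proof -
  have "Dz z \<noteq> Dz w" using Dz_inj zl wl ne unfolding inj_on_def by blast
  then obtain k where k: "(k \<in> Dz z) \<noteq> (k \<in> Dz w)" by blast
  have "Fz z \<inter> Fz w \<subseteq> (\<lambda>n. to_nat (pfx (Dz z) n)) ` {..k}"
  proof
    fix c assume "c \<in> Fz z \<inter> Fz w"
    then obtain n m where n: "c = to_nat (pfx (Dz z) n)" and m: "c = to_nat (pfx (Dz w) m)"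
      unfolding Fz_def by blast
    then have "pfx (Dz z) n = pfx (Dz w) m" by simp
    then have "\<forall>k'<n. (k' \<in> Dz z) = (k' \<in> Dz w)" using pfx_eq by blast
    then have "n \<le> k" using k by (meson not_le)
    then show "c \<in> (\<lambda>n. to_nat (pfx (Dz z) n)) ` {..k}" using n by simp
  qed
  then show ?thesis using finite_subset by blast
qed

lemma bz_spec: "x < l \<Longrightarrow> bz x < l \<and> x \<in> Iblk (bz x)"
  unfolding bz_def using cover by (metis (mono_tags, lifting) someI_ex)

lemma bz_unique: "z < l \<Longrightarrow> x \<in> Iblk z \<Longrightarrow> bz x = z"
proof -
  assume zl: "z < l" and x: "x \<in> Iblk z"
  have xl: "x < l" using blk_sub[OF zl x] .
  show "bz x = z"
  proof (rule ccontr)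
    assume "bz x \<noteq> z"
    then have "Iblk (bz x) \<inter> Iblk z = {}" using blk_disj bz_spec[OF xl] zl by blast
    then show False using bz_spec[OF xl] x by blast
  qed
qed

lemma fz_bij: "z < l \<Longrightarrow> bij_betw (fz z) UNIV (Iblk z)"
proof -
  assume zl: "z < l"
  have "{y. y < (oomega::'o)} = range e" using omega_facts[OF uncU] by blast
  moreover have "inj (e :: nat \<Rightarrow> 'o)" using e_strict_mono[OF uncU] strict_mono_imp_inj_on by blast
  ultimately have "(UNIV::nat set) \<approx> {y. y < (oomega::'o)}"
    unfolding eqpoll_def by (metis bij_betw_def)
  then have "(UNIV::nat set) \<approx> Iblk z" using blk_card[OF zl] eqpoll_sym eqpoll_trans by metis
  then have "\<exists>f. bij_betw f (UNIV::nat set) (Iblk z)" unfolding eqpoll_def .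
  then show ?thesis unfolding fz_def by (rule someI_ex)
qed

lemma idx_inv: "x < l \<Longrightarrow> fz (bz x) (idx x) = x"
proof -
  assume xl: "x < l"
  have "x \<in> range (fz (bz x))" using fz_bij bz_spec[OF xl] unfolding bij_betw_def by blast
  then show ?thesis unfolding idx_def by (rule f_inv_into_f)
qed

lemma Q_sub: "Qx x \<subseteq> Fz (bz x)" unfolding Qx_def Fz_def by blast

lemma Q_inf: "infinite (Qx x)"
proof -
  have "inj (\<lambda>j. to_nat (pfx (Dz (bz x)) (prod_encode (idx x, j))))"
  proof (rule injI)
    fix j j' assume "to_nat (pfx (Dz (bz x)) (prod_encode (idx x, j))) = to_nat (pfx (Dz (bz x)) (prod_encode (idx x, j')))"
    then have "length (pfx (Dz (bz x)) (prod_encode (idx x, j))) = length (pfx (Dz (bz x)) (prod_encode (idx x, j')))" by simp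
    then show "j = j'" by simp
  qed
  then show ?thesis unfolding Qx_def using range_inj_infinite by blast
qed

lemma Q_disj: assumes zl: "z < l" and x: "x \<in> Iblk z" and y: "y \<in> Iblk z" and ne: "x \<noteq> y"
  shows "Qx x \<inter> Qx y = {}"
proof -
  have bx: "bz x = z" and by': "bz y = z" using bz_unique zl x y by auto
  have "idx x \<noteq> idx y" using idx_inv blk_sub[OF zl x] blk_sub[OF zl y] bx by' ne by metis
  then show ?thesis unfolding Qx_def using bx by' by (auto dest!: arg_cong[where f=length])
qed

lemma Q_fin: assumes xl: "x < l" and yl: "y < l" and ne: "x \<noteq> y" shows "finite (Qx x \<inter> Qx y)"
proof (cases "bz x = bz y")
  case True
  then show ?thesis using Q_disj[of "bz x" x y] bz_spec[OF xl] bz_spec[OF yl] ne by simp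
next
  case False
  then have "finite (Fz (bz x) \<inter> Fz (bz y))" using Ffin bz_spec xl yl by blast
  moreover have "Qx x \<inter> Qx y \<subseteq> Fz (bz x) \<inter> Fz (bz y)" using Q_sub by blast
  ultimately show ?thesis using finite_subset by blast
qed

lemma A_union: assumes zl: "z < l" shows "Fz z = \<Union> (Qx ` Iblk z)"
proof
  show "\<Union> (Qx ` Iblk z) \<subseteq> Fz z" using Q_sub bz_unique[OF zl] by blast
  show "Fz z \<subseteq> \<Union> (Qx ` Iblk z)"
  proof
    fix c assume "c \<in> Fz z"
    then obtain n where n: "c = to_nat (pfx (Dz z) n)" unfolding Fz_def by blast
    obtain k j where kj: "n = prod_encode (k, j)" by (metis prod_decode_inverse surj_pair)
    define x where "x = fz z k"
    have xI: "x \<in> Iblk z" using fz_bij[OF zl] unfolding x_def bij_betw_def by blast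
    have bx: "bz x = z" using bz_unique[OF zl xI] .
    have "idx x = inv_into UNIV (fz z) x" using bx idx_def by simp
    also have "\<dots> = k" unfolding x_def
      using fz_bij[OF zl] by (simp add: bij_betw_def inv_into_f_f)
    finally have "idx x = k" .
    then have "c \<in> Qx x" unfolding Qx_def using bx n kj by blast
    then show "c \<in> \<Union> (Qx ` Iblk z)" using xI by blast
  qed
qed

lemma AQ_fin: assumes zl: "z < l" and xl: "x < l" and nx: "x \<notin> Iblk z" shows "finite (Fz z \<inter> Qx x)"
proof -
  have "bz x \<noteq> z" using bz_spec[OF xl] nx by auto
  then have "finite (Fz z \<inter> Fz (bz x))" using Ffin zl bz_spec[OF xl] by blast
  then show ?thesis using Q_sub finite_subset by (metis Int_mono order_refl)
qed

lemma Q_blk_inf: "z < l \<Longrightarrow> infinite (Iblk z)" by (rule blk_inf)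

end

datatype 'o pt = PL nat nat | PM 'o | PT 'o

locale constr =
  fixes l gam :: "'o::wellorder" and NL :: "nat set"
    and TL :: "nat \<times> nat \<Rightarrow> nat \<times> nat \<Rightarrow> bool" and rt :: "nat \<times> nat \<Rightarrow> nat"
    and root :: "nat \<Rightarrow> nat \<times> nat" and Q A :: "'o \<Rightarrow> nat set"
  assumes e_mono: "strict_mono (e::nat \<Rightarrow> 'o)"
    and e_range: "range e = {y::'o. y < oomega}"
    and gam_NL: "{a. a < gam} = e ` NL"
    and gam_s: "gam < osucc gam" and gam_ss: "osucc gam < osucc (osucc gam)"
    and e_succ: "n \<in> NL \<Longrightarrow> osucc (e n) = (if Suc n \<in> NL then e (Suc n) else gam)"
    and NL0: "0 \<in> NL" and NL_top: "n \<in> NL \<Longrightarrow> Suc n \<notin> NL \<Longrightarrow> m \<in> NL \<Longrightarrow> m = n"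
    and l_pos: "ozero < l"
    and one: "{y::'o. y < oone} = {ozero}"
    and TL_refl: "TL u u"
    and TL_antisym: "TL u v \<Longrightarrow> TL v u \<Longrightarrow> u = v"
    and TL_trans: "TL u v \<Longrightarrow> TL v w \<Longrightarrow> TL u w"
    and TL_lev: "TL u v \<Longrightarrow> fst u \<le> fst v"
    and TL_same: "TL u v \<Longrightarrow> fst u = fst v \<Longrightarrow> u = v"
    and TL_rt: "TL u v \<Longrightarrow> rt u = rt v"
    and TL_NL: "TL u v \<Longrightarrow> fst v \<in> NL \<Longrightarrow> fst u \<in> NL"
    and root_NL: "fst (root j) \<in> NL"
    and root_rt: "rt (root j) = j"
    and root_top: "fst u \<in> NL \<Longrightarrow> TL u (root (rt u))"
    and TL_tree: "TL w u \<Longrightarrow> TL w v \<Longrightarrow> TL u v \<or> TL v u"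
    and fiber_inf: "n \<in> NL \<Longrightarrow> infinite S \<Longrightarrow> infinite {a. rt (n, a) \<in> S}"
    and below_inf: "m \<in> NL \<Longrightarrow> n < m \<Longrightarrow> infinite {a. TL (n, a) (m, b)}"
    and succ_step: "Suc m \<in> NL \<Longrightarrow> TL u (Suc m, b) \<Longrightarrow> fst u \<le> m \<Longrightarrow> \<exists>a. TL u (m, a) \<and> TL (m, a) (Suc m, b)"
    and blk_sub: "z < l \<Longrightarrow> x \<in> Iblk z \<Longrightarrow> x < l"
    and blk_card: "z < l \<Longrightarrow> Iblk z \<approx> {y::'o. y < oomega}"
    and blk_inf: "z < l \<Longrightarrow> infinite (Iblk z)"
    and blk_disj: "z < l \<Longrightarrow> z' < l \<Longrightarrow> z \<noteq> z' \<Longrightarrow> Iblk z \<inter> Iblk z' = {}"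
    and q1: "x < l \<Longrightarrow> infinite (Q x)"
    and q2: "x < l \<Longrightarrow> y < l \<Longrightarrow> x \<noteq> y \<Longrightarrow> finite (Q x \<inter> Q y)"
    and q3: "z < l \<Longrightarrow> x \<in> Iblk z \<Longrightarrow> y \<in> Iblk z \<Longrightarrow> x \<noteq> y \<Longrightarrow> Q x \<inter> Q y = {}"
    and q4: "z < l \<Longrightarrow> A z = \<Union> (Q ` Iblk z)"
    and q5: "z < l \<Longrightarrow> z' < l \<Longrightarrow> z \<noteq> z' \<Longrightarrow> finite (A z \<inter> A z')"
    and q6: "z < l \<Longrightarrow> x < l \<Longrightarrow> x \<notin> Iblk z \<Longrightarrow> finite (A z \<inter> Q x)"
begin

fun valid :: "'o pt \<Rightarrow> bool" where
  "valid (PL n a) = (n \<in> NL)"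
| "valid (PM x) = (x < l)"
| "valid (PT z) = (z < l)"

fun emb :: "'o pt \<Rightarrow> 'o \<times> 'o" where
  "emb (PL n a) = (e n, e a)"
| "emb (PM x) = (gam, x)"
| "emb (PT z) = (osucc gam, z)"

fun lep :: "'o pt \<Rightarrow> 'o pt \<Rightarrow> bool" where
  "lep (PL n a) (PL m b) = TL (n, a) (m, b)"
| "lep (PL n a) (PM x) = (rt (n, a) \<in> Q x)"
| "lep (PL n a) (PT z) = (rt (n, a) \<in> A z)"
| "lep (PM x) (PM y) = (x = y)"
| "lep (PM x) (PT z) = (x \<in> Iblk z)"
| "lep (PT z) (PT w) = (z = w)"
| "lep _ _ = False"

fun RSp :: "'o pt \<Rightarrow> nat set" where
  "RSp (PL n a) = {}"
| "RSp (PM x) = Q x"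
| "RSp (PT z) = A z"

definition rootpt :: "nat \<Rightarrow> 'o pt" where "rootpt j = PL (fst (root j)) (snd (root j))"

definition ipt :: "'o pt \<Rightarrow> 'o pt \<Rightarrow> 'o pt set" where
  "ipt u v = (if lep u v then {u} else if lep v u then {v} else rootpt ` (RSp u \<inter> RSp v))"

definition V :: "'o pt set" where "V = {u. valid u}"

lemma e_inj: "inj (e::nat \<Rightarrow> 'o)" using e_mono strict_mono_imp_inj_on by blast
lemma e_eq[simp]: "(e n :: 'o) = e m \<longleftrightarrow> n = m" using e_inj by (meson injD)
lemma e_less[simp]: "(e n :: 'o) < e m \<longleftrightarrow> n < m" using e_mono by (simp add: strict_mono_less)
lemma e_NL: "n \<in> NL \<Longrightarrow> e n < gam" using gam_NL by blast
lemma gam_e: "a < gam \<Longrightarrow> \<exists>n\<in>NL. a = e n" using gam_NL by blast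
lemma gam_ne[simp]: "gam \<noteq> osucc gam" "osucc gam \<noteq> gam" using gam_s by auto

lemma e_NL_ne: "n \<in> NL \<Longrightarrow> e n \<noteq> gam \<and> e n \<noteq> osucc gam \<and> gam \<noteq> e n \<and> osucc gam \<noteq> e n"
  using e_NL[of n] order.strict_trans[OF e_NL[of n] gam_s] by auto

lemma emb_inj: "valid u \<Longrightarrow> valid v \<Longrightarrow> emb u = emb v \<Longrightarrow> u = v"
  by (cases u; cases v) (auto dest: e_NL_ne)

lemma emb_eq_iff: "valid u \<Longrightarrow> valid v \<Longrightarrow> emb u = emb v \<longleftrightarrow> u = v"
  using emb_inj by blast

lemma Y_eq: "Y l gam = emb ` V"
proof
  show "Y l gam \<subseteq> emb ` V"
  proof
    fix p assume "p \<in> Y l gam"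
    then obtain a b where p: "p = (a, b)" and
      h: "(a < gam \<and> b < oomega) \<or> ((a = gam \<or> a = osucc gam) \<and> b < l)" unfolding Y_def by blast
    show "p \<in> emb ` V"
    proof (cases "a < gam")
      case True
      then obtain n where n: "n \<in> NL" "a = e n" using gam_e by blast
      have "b < oomega" using h True gam_s by auto
      then obtain m where "b = e m" using e_range by (metis (mono_tags, lifting) imageE mem_Collect_eq)
      then have "p = emb (PL n m)" using p n by simp
      then show ?thesis unfolding V_def using n by (intro image_eqI[of _ _ "PL n m"]) auto
    next
      case False
      then have "(a = gam \<or> a = osucc gam) \<and> b < l" using h by blast
      then show ?thesis unfolding V_def using p
        by (metis emb.simps(2) emb.simps(3) image_eqI mem_Collect_eq valid.simps(2) valid.simps(3))
    qed
  qed
  show "emb ` V \<subseteq> Y l gam"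
  proof
    fix p assume "p \<in> emb ` V"
    then obtain u where u: "valid u" "p = emb u" unfolding V_def by blast
    show "p \<in> Y l gam"
    proof (cases u)
      case (PL n a)
      have "(e a::'o) < oomega" using e_range by blast
      then show ?thesis using u PL e_NL unfolding Y_def by auto
    qed (use u in \<open>auto simp: Y_def\<close>)
  qed
qed

lemma lep_refl: "lep u u" by (cases u) (auto simp: TL_refl)

lemma lep_antisym: "lep u v \<Longrightarrow> lep v u \<Longrightarrow> u = v"
  by (cases u; cases v) (auto dest: TL_antisym)

lemma lep_trans: "valid u \<Longrightarrow> valid v \<Longrightarrow> valid w \<Longrightarrow> lep u v \<Longrightarrow> lep v w \<Longrightarrow> lep u w"
proof (cases u; cases v; cases w)
  fix n a m b x z
  assume "valid u" "valid v" "valid w" "lep u v" "lep v w" "u = PL n a" "v = PM x" "w = PT z"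
  then show "lep u w" using q4 by auto
qed (auto dest: TL_rt intro: TL_trans)

lemma lep_lev: "valid u \<Longrightarrow> valid v \<Longrightarrow> lep u v \<Longrightarrow> u \<noteq> v \<Longrightarrow> fst (emb u) < fst (emb v)"
proof (cases u; cases v)
  fix n a m b assume "lep u v" "u \<noteq> v" "u = PL n a" "v = PL m b"
  then have "n \<le> m" "n \<noteq> m" using TL_lev TL_same by fastforce+
  then show "fst (emb u) < fst (emb v)" using \<open>u = PL n a\<close> \<open>v = PL m b\<close> by simp
qed (auto dest: e_NL intro: order.strict_trans[OF _ gam_s] simp: gam_s)


lemma rt_rootpt: "rootpt j = PL n a \<Longrightarrow> rt (n, a) = j \<and> n \<in> NL"
  unfolding rootpt_def using root_rt[of j] root_NL[of j] by (metis prod.collapse pt.inject(1))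

lemma ipt_V: "ipt u v \<subseteq> V \<union> {u, v}"
  unfolding ipt_def V_def rootpt_def using root_NL by auto

lemma RS_fin: "valid u \<Longrightarrow> valid v \<Longrightarrow> u \<noteq> v \<Longrightarrow> \<not> lep u v \<Longrightarrow> \<not> lep v u \<Longrightarrow> finite (RSp u \<inter> RSp v)"
proof (cases u; cases v)
  fix x z assume "valid u" "valid v" "\<not> lep u v" "u = PM x" "v = PT z"
  then show "finite (RSp u \<inter> RSp v)" using q6[of z x] by (simp add: Int_commute)
next
  fix x z assume "valid u" "valid v" "\<not> lep v u" "u = PT z" "v = PM x"
  then show "finite (RSp u \<inter> RSp v)" using q6[of z x] by simp
qed (auto intro: q2 q5)

lemma ipt_fin: "valid u \<Longrightarrow> valid v \<Longrightarrow> u \<noteq> v \<Longrightarrow> finite (ipt u v)"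
  unfolding ipt_def using RS_fin by auto

lemma rootpt_below: "j \<in> RSp u \<Longrightarrow> lep (rootpt j) u"
proof (cases u)
  case (PM x)
  assume "j \<in> RSp u"
  then show ?thesis using PM root_rt[of j] unfolding rootpt_def by simp
next
  case (PT z)
  assume "j \<in> RSp u"
  then show ?thesis using PT root_rt[of j] unfolding rootpt_def by simp
qed simp

lemma ipt_low: "w \<in> ipt u v \<Longrightarrow> lep w u \<and> lep w v"
  unfolding ipt_def using lep_refl rootpt_below by (auto split: if_splits)

lemma ipt_cov:
  assumes vu: "valid u" and vv: "valid v" and vw: "valid w" and wu: "lep w u" and wv: "lep w v"
  shows "\<exists>w'\<in>ipt u v. lep w w'"
proof (cases "lep u v \<or> lep v u")
  case True
  then show ?thesis unfolding ipt_def using wu wv by auto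
next
  case False
  then have nuv: "\<not> lep u v" "\<not> lep v u" by auto
  show ?thesis
  proof (cases w)
    case (PL n a)
    have nNL: "n \<in> NL" using vw PL by simp
    have "rt (n, a) \<in> RSp u \<inter> RSp v"
    proof (cases u; cases v)
      fix n1 a1 n2 a2 assume "u = PL n1 a1" "v = PL n2 a2"
      then show ?thesis using wu wv PL nuv TL_tree by force
    next
      fix n1 a1 x assume u: "u = PL n1 a1" and v: "v = PM x"
      then have "rt (n1, a1) = rt (n, a)" using wu PL TL_rt by simp
      then show ?thesis using wv u v PL nuv by simp
    next
      fix n1 a1 x assume u: "u = PL n1 a1" and v: "v = PT x"
      then have "rt (n1, a1) = rt (n, a)" using wu PL TL_rt by simp
      then show ?thesis using wv u v PL nuv by simp
    next
      fix n1 a1 x assume v: "v = PL n1 a1" and u: "u = PM x"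
      then have "rt (n1, a1) = rt (n, a)" using wv PL TL_rt by simp
      then show ?thesis using wu u v PL nuv by simp
    next
      fix n1 a1 x assume v: "v = PL n1 a1" and u: "u = PT x"
      then have "rt (n1, a1) = rt (n, a)" using wv PL TL_rt by simp
      then show ?thesis using wu u v PL nuv by simp
    qed (use wu wv PL in auto)
    moreover have "lep w (rootpt (rt (n, a)))"
      using root_top[of "(n, a)"] nNL PL unfolding rootpt_def by simp
    ultimately show ?thesis unfolding ipt_def using nuv by auto
  next
    case (PM x)
    show ?thesis
    proof (cases u; cases v)
      fix z z' assume u: "u = PT z" and v: "v = PT z'"
      then have "x \<in> Iblk z" "x \<in> Iblk z'" using wu wv PM by auto
      then have "z = z'" using blk_disj vu vv u v by auto
      then show ?thesis using nuv u v by simp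
    qed (use wu wv PM nuv in auto)
  next
    case (PT z)
    then show ?thesis using wu wv nuv by (cases u; cases v) auto
  qed
qed


definition LE :: "'o \<times> 'o \<Rightarrow> 'o \<times> 'o \<Rightarrow> bool" where
  "LE p q \<longleftrightarrow> (\<exists>u v. valid u \<and> valid v \<and> p = emb u \<and> q = emb v \<and> lep u v)"

definition II :: "('o \<times> 'o) set \<Rightarrow> ('o \<times> 'o) set" where
  "II S = {p. \<exists>u v. valid u \<and> valid v \<and> u \<noteq> v \<and> S = {emb u, emb v} \<and> p \<in> emb ` ipt u v}"

lemma LE_emb[simp]: "valid u \<Longrightarrow> valid v \<Longrightarrow> LE (emb u) (emb v) \<longleftrightarrow> lep u v"
  unfolding LE_def using emb_inj by blast

lemma LE_D: "LE p q \<Longrightarrow> \<exists>u v. valid u \<and> valid v \<and> p = emb u \<and> q = emb v \<and> lep u v"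
  unfolding LE_def by blast

lemma ipt_sym: "valid u \<Longrightarrow> valid v \<Longrightarrow> u \<noteq> v \<Longrightarrow> ipt u v = ipt v u"
  unfolding ipt_def using lep_antisym by (auto simp: Int_commute)

lemma II_emb: assumes vu: "valid u" and vv: "valid v" and ne: "u \<noteq> v"
  shows "II {emb u, emb v} = emb ` ipt u v"
proof
  show "emb ` ipt u v \<subseteq> II {emb u, emb v}" unfolding II_def using vu vv ne by blast
  show "II {emb u, emb v} \<subseteq> emb ` ipt u v"
  proof
    fix p assume "p \<in> II {emb u, emb v}"
    then obtain u' v' where h: "valid u'" "valid v'" "u' \<noteq> v'" "{emb u, emb v} = {emb u', emb v'}"
      "p \<in> emb ` ipt u' v'" unfolding II_def by blast
    have "(u' = u \<and> v' = v) \<or> (u' = v \<and> v' = u)"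
      using h(4) emb_inj[OF h(1) vu] emb_inj[OF h(1) vv] emb_inj[OF h(2) vu] emb_inj[OF h(2) vv]
      by (metis doubleton_eq_iff)
    then show "p \<in> emb ` ipt u v" using h(5) ipt_sym[OF vu vv ne] by auto
  qed
qed

lemma lev_below: "valid u \<Longrightarrow> fst (emb u) \<le> osucc gam"
  by (cases u) (use e_NL gam_s in \<open>auto intro: less_imp_le order.strict_trans\<close>)

lemma below_osucc_gam: "a < osucc gam \<Longrightarrow> a < gam \<or> a = gam"
  using less_osucc[OF gam_s, of a] by auto

lemma pt_inf: assumes vv: "valid v" and a: "a < fst (emb v)"
  shows "infinite {u. valid u \<and> fst (emb u) = a \<and> lep u v \<and> u \<noteq> v}"
proof -
  have injL: "inj (PL n)" for n by (simp add: inj_def)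
  have gen: "infinite S \<Longrightarrow> inj f \<Longrightarrow> f ` S \<subseteq> T \<Longrightarrow> infinite T" for S T and f :: "'x \<Rightarrow> 'o pt"
    using finite_imageD finite_subset by (metis inj_on_subset subset_UNIV)
  show ?thesis
  proof (cases v)
    case (PL m b)
    have mNL: "m \<in> NL" using vv PL by simp
    have "a < gam" using a PL e_NL[OF mNL] by simp
    then obtain n where n: "n \<in> NL" "a = e n" using gam_e by blast
    have nm: "n < m" using a PL n by simp
    show ?thesis
    proof (rule gen[OF below_inf[OF mNL nm, of b] injL])
      show "PL n ` {a. TL (n, a) (m, b)} \<subseteq> {u. valid u \<and> fst (emb u) = a \<and> lep u v \<and> u \<noteq> v}"
        using n nm PL by auto
    qed
  next
    case (PM x)
    have xl: "x < l" using vv PM by simp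
    have "a < gam" using a PM by simp
    then obtain n where n: "n \<in> NL" "a = e n" using gam_e by blast
    show ?thesis
    proof (rule gen[OF fiber_inf[OF n(1) q1[OF xl]] injL])
      show "PL n ` {a. rt (n, a) \<in> Q x} \<subseteq> {u. valid u \<and> fst (emb u) = a \<and> lep u v \<and> u \<noteq> v}"
        using n PM by auto
    qed
  next
    case (PT z)
    have zl: "z < l" using vv PT by simp
    have "a < osucc gam" using a PT by simp
    then consider "a < gam" | "a = gam" using below_osucc_gam by blast
    then show ?thesis
    proof cases
      case 1
      then obtain n where n: "n \<in> NL" "a = e n" using gam_e by blast
      obtain x where x: "x \<in> Iblk z" using blk_inf[OF zl] by (metis finite.emptyI ex_in_conv)
      have "Q x \<subseteq> A z" using q4[OF zl] x by blast
      then have Ainf: "infinite (A z)" using q1[OF blk_sub[OF zl x]] finite_subset by blast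
      show ?thesis
      proof (rule gen[OF fiber_inf[OF n(1) Ainf] injL])
        show "PL n ` {a. rt (n, a) \<in> A z} \<subseteq> {u. valid u \<and> fst (emb u) = a \<and> lep u v \<and> u \<noteq> v}"
          using n PT by auto
      qed
    next
      case 2
      have injM: "inj (PM :: 'o \<Rightarrow> 'o pt)" by (simp add: inj_def)
      show ?thesis
      proof (rule gen[OF blk_inf[OF zl] injM])
        show "PM ` Iblk z \<subseteq> {u. valid u \<and> fst (emb u) = a \<and> lep u v \<and> u \<noteq> v}"
          using 2 PT blk_sub[OF zl] by auto
      qed
    qed
  qed
qed

lemma emb_inj_on: "inj_on emb V" unfolding V_def inj_on_def using emb_inj by blast

theorem LCS_Y: "LCS_poset (Y l gam) LE II"
  unfolding LCS_poset_def Y_eq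
proof (intro conjI)
  show "\<forall>s t. LE s t \<longrightarrow> s \<in> emb ` V \<and> t \<in> emb ` V" unfolding LE_def V_def by blast
  show "\<forall>s\<in>emb ` V. LE s s" unfolding V_def using lep_refl by auto
  show "\<forall>s t. LE s t \<and> LE t s \<longrightarrow> s = t"
  proof (intro allI impI)
    fix s t assume h: "LE s t \<and> LE t s"
    then obtain a b where ab: "valid a" "valid b" "s = emb a" "t = emb b" "lep a b" using LE_D by blast
    then have "lep b a" using h LE_emb by simp
    then have "a = b" using ab(5) lep_antisym by blast
    then show "s = t" using ab by simp
  qed
  show "\<forall>s t u. LE s t \<and> LE t u \<longrightarrow> LE s u"
  proof (intro allI impI)
    fix s t u assume "LE s t \<and> LE t u"
    then have st: "LE s t" and tu: "LE t u" by auto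
    obtain a b where h1: "valid a" "valid b" "s = emb a" "t = emb b" "lep a b" using LE_D[OF st] by blast
    obtain b' c where h2: "valid b'" "valid c" "t = emb b'" "u = emb c" "lep b' c" using LE_D[OF tu] by blast
    have "b = b'" using emb_inj[of b b'] h1(2,4) h2(1,3) by simp
    then have "lep a c" using lep_trans[OF h1(1,2) h2(2) h1(5)] h2(5) by simp
    then show "LE s u" using h1 h2 by simp
  qed
  have "PL 0 0 \<in> V" unfolding V_def using NL0 by simp
  then show "emb ` V \<noteq> {}" by blast
  show "\<forall>a b. b \<in> fst ` emb ` V \<and> a < b \<longrightarrow> a \<in> fst ` emb ` V"
  proof (intro allI impI)
    fix a b assume h: "b \<in> fst ` emb ` V \<and> a < b"
    then obtain u where u: "valid u" "b = fst (emb u)" unfolding V_def by blast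
    have "a < osucc gam" using h u lev_below by (meson order.strict_trans2)
    then consider "a < gam" | "a = gam" using below_osucc_gam by blast
    then show "a \<in> fst ` emb ` V"
    proof cases
      case 1
      then obtain n where n: "n \<in> NL" "a = e n" using gam_e by blast
      then have "a = fst (emb (PL n 0))" by simp
      moreover have "PL n 0 \<in> V" unfolding V_def using n by simp
      ultimately show ?thesis by blast
    next
      case 2
      then have "a = fst (emb (PM ozero))" by simp
      moreover have "PM ozero \<in> V" unfolding V_def using l_pos by simp
      ultimately show ?thesis by blast
    qed
  qed
  show "\<forall>s t. strict LE s t \<longrightarrow> fst s < fst t"
  proof (intro allI impI)
    fix s t assume h: "strict LE s t"
    then obtain a b where ab: "valid a" "valid b" "s = emb a" "t = emb b" "lep a b" using LE_D strict_def by metis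
    then have "a \<noteq> b" using h unfolding strict_def by blast
    then show "fst s < fst t" using lep_lev ab by blast
  qed
  show "\<forall>t\<in>emb ` V. \<forall>a. a < fst t \<longrightarrow> infinite {s \<in> level (emb ` V) a. strict LE s t}"
  proof (intro ballI allI impI)
    fix t a assume t: "t \<in> emb ` V" and a: "a < fst t"
    then obtain v where v: "valid v" "t = emb v" unfolding V_def by blast
    let ?S = "{u. valid u \<and> fst (emb u) = a \<and> lep u v \<and> u \<noteq> v}"
    have inf: "infinite ?S" using pt_inf v a by blast
    have sub: "emb ` ?S \<subseteq> {s \<in> level (emb ` V) a. strict LE s t}"
      unfolding level_def strict_def V_def using v emb_inj by auto
    have "inj_on emb ?S" using emb_inj_on unfolding V_def by (rule inj_on_subset) blast
    then have "infinite (emb ` ?S)" using inf finite_imageD by blast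
    then show "infinite {s \<in> level (emb ` V) a. strict LE s t}" using sub finite_subset by blast
  qed
  show "\<forall>s\<in>emb ` V. \<forall>t\<in>emb ` V. s \<noteq> t \<longrightarrow>
        finite (II {s, t}) \<and> II {s, t} \<subseteq> emb ` V \<and>
        (\<forall>v\<in>II {s, t}. LE v s \<and> LE v t) \<and>
        (\<forall>u. LE u s \<and> LE u t \<longrightarrow> (\<exists>v\<in>II {s, t}. LE u v))"
  proof (intro ballI impI)
    fix s t assume s: "s \<in> emb ` V" and t: "t \<in> emb ` V" and ne: "s \<noteq> t"
    obtain u v where uv: "valid u" "valid v" "s = emb u" "t = emb v" using s t unfolding V_def by blast
    have une: "u \<noteq> v" using ne uv by blast
    have II: "II {s, t} = emb ` ipt u v" using II_emb[OF uv(1,2) une] uv by simp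
    have iV: "ipt u v \<subseteq> V" using ipt_V[of u v] uv unfolding V_def by blast
    show "finite (II {s, t}) \<and> II {s, t} \<subseteq> emb ` V \<and>
        (\<forall>v\<in>II {s, t}. LE v s \<and> LE v t) \<and>
        (\<forall>u. LE u s \<and> LE u t \<longrightarrow> (\<exists>v\<in>II {s, t}. LE u v))"
    proof (intro conjI)
      show "finite (II {s, t})" unfolding II using ipt_fin[OF uv(1,2) une] by simp
      show "II {s, t} \<subseteq> emb ` V" unfolding II using iV by blast
      show "\<forall>w\<in>II {s, t}. LE w s \<and> LE w t"
        unfolding II using iV ipt_low uv unfolding V_def by fastforce
      show "\<forall>w. LE w s \<and> LE w t \<longrightarrow> (\<exists>v\<in>II {s, t}. LE w v)"
      proof (intro allI impI)
        fix w assume "LE w s \<and> LE w t"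
        then obtain w' u' where w'': "valid w'" "valid u'" "w = emb w'" "s = emb u'" "lep w' u'"
          using LE_D by blast
        then have "u' = u" using uv emb_inj by blast
        then have w': "valid w'" "w = emb w'" "lep w' u" "lep w' v"
          using w'' \<open>LE w s \<and> LE w t\<close> uv by auto
        obtain x where x: "x \<in> ipt u v" "lep w' x" using ipt_cov[OF uv(1,2) w'(1,3,4)] by blast
        have "valid x" using iV x(1) unfolding V_def by blast
        then have "LE (emb w') (emb x)" using x w' by simp
        then show "\<exists>v\<in>II {s, t}. LE w v" unfolding II using x w' by blast
      qed
    qed
  qed
qed

end

lemma LCS_restr:
  assumes L: "LCS_poset T le i" and ST: "S \<subseteq> T" and cl: "closed_under i S"
    and down: "\<forall>u t. le u t \<and> t \<in> S \<longrightarrow> u \<in> S" and ne: "S \<noteq> {}"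
    and lev: "\<forall>a b. b \<in> fst ` S \<and> a < b \<longrightarrow> a \<in> fst ` S"
  shows "LCS_poset S (restr le S) i"
  unfolding LCS_poset_def
proof (intro conjI)
  show "\<forall>s t. restr le S s t \<longrightarrow> s \<in> S \<and> t \<in> S" unfolding restr_def by blast
  show "\<forall>s\<in>S. restr le S s s" unfolding restr_def using LCS_refl[OF L] ST by blast
  show "\<forall>s t. restr le S s t \<and> restr le S t s \<longrightarrow> s = t" unfolding restr_def using LCS_antisym[OF L] by blast
  show "\<forall>s t u. restr le S s t \<and> restr le S t u \<longrightarrow> restr le S s u" unfolding restr_def using LCS_trans[OF L] by blast
  show "S \<noteq> {}" by (rule ne)
  show "\<forall>a b. b \<in> fst ` S \<and> a < b \<longrightarrow> a \<in> fst ` S" by (rule lev)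
  show "\<forall>s t. strict (restr le S) s t \<longrightarrow> fst s < fst t"
    unfolding strict_def restr_def using LCS_strict[OF L] unfolding strict_def by blast
  show "\<forall>t\<in>S. \<forall>a. a < fst t \<longrightarrow> infinite {s \<in> level S a. strict (restr le S) s t}"
  proof (intro ballI allI impI)
    fix t a assume t: "t \<in> S" and a: "a < fst t"
    have "{s \<in> level T a. strict le s t} = {s \<in> level S a. strict (restr le S) s t}"
      unfolding level_def strict_def restr_def using t down ST by blast
    then show "infinite {s \<in> level S a. strict (restr le S) s t}"
      using LCS_inf[OF L _ a] t ST by auto
  qed
  show "\<forall>s\<in>S. \<forall>t\<in>S. s \<noteq> t \<longrightarrow>
        finite (i {s, t}) \<and> i {s, t} \<subseteq> S \<and>
        (\<forall>v\<in>i {s, t}. restr le S v s \<and> restr le S v t) \<and>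
        (\<forall>u. restr le S u s \<and> restr le S u t \<longrightarrow> (\<exists>v\<in>i {s, t}. restr le S u v))"
  proof (intro ballI impI)
    fix s t assume s: "s \<in> S" and t: "t \<in> S" and st: "s \<noteq> t"
    have sT: "s \<in> T" and tT: "t \<in> T" using s t ST by auto
    have iS: "i {s, t} \<subseteq> S" using cl s t st unfolding closed_under_def by blast
    show "finite (i {s, t}) \<and> i {s, t} \<subseteq> S \<and>
        (\<forall>v\<in>i {s, t}. restr le S v s \<and> restr le S v t) \<and>
        (\<forall>u. restr le S u s \<and> restr le S u t \<longrightarrow> (\<exists>v\<in>i {s, t}. restr le S u v))"
    proof (intro conjI)
    show "finite (i {s, t})" using LCS_ifin[OF L sT tT st] .
    show "i {s, t} \<subseteq> S" by (rule iS)
    show "\<forall>v\<in>i {s, t}. restr le S v s \<and> restr le S v t"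
      using LCS_ilow[OF L sT tT st] iS s t unfolding restr_def by blast
    show "\<forall>u. restr le S u s \<and> restr le S u t \<longrightarrow> (\<exists>v\<in>i {s, t}. restr le S u v)"
    proof (intro allI impI)
      fix u assume "restr le S u s \<and> restr le S u t"
      then have u: "u \<in> S" "le u s" "le u t" unfolding restr_def by auto
      obtain v where "v \<in> i {s, t}" "le u v" using LCS_icov[OF L sT tT st u(2,3)] by blast
      then show "\<exists>v\<in>i {s, t}. restr le S u v" using iS u(1) unfolding restr_def by blast
    qed
    qed
  qed
qed

context constr begin

definition SZ :: "'o \<Rightarrow> ('o \<times> 'o) set" where "SZ z = BS gam \<union> Bz gam z"

lemma mem_SZ: "p \<in> SZ z \<longleftrightarrow> (fst p < gam \<and> snd p < oomega) \<or> (fst p = gam \<and> snd p \<in> Iblk z) \<or> p = (osucc gam, z)"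
  unfolding SZ_def BS_def Bz_def Iblk_def by (cases p) auto

definition Vz :: "'o \<Rightarrow> 'o pt set" where
  "Vz z = {u. valid u \<and> (case u of PL n a \<Rightarrow> True | PM x \<Rightarrow> x \<in> Iblk z | PT w \<Rightarrow> w = z)}"

lemma SZ_emb: assumes zl: "z < l" shows "SZ z = emb ` Vz z"
proof
  show "SZ z \<subseteq> emb ` Vz z"
  proof
    fix p assume p: "p \<in> SZ z"
    obtain a b where ab: "p = (a, b)" by (cases p)
    consider "a < gam \<and> b < oomega" | "a = gam \<and> b \<in> Iblk z" | "p = (osucc gam, z)"
      using p[unfolded mem_SZ] ab by auto
    then show "p \<in> emb ` Vz z"
    proof cases
      case 1
      then obtain n where n: "n \<in> NL" "a = e n" using gam_e by blast
      obtain m where m: "b = e m" using 1 e_range by (metis (mono_tags, lifting) imageE mem_Collect_eq)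
      have "PL n m \<in> Vz z" unfolding Vz_def using n by simp
      moreover have "p = emb (PL n m)" using ab n m by simp
      ultimately show ?thesis by blast
    next
      case 2
      have "PM b \<in> Vz z" unfolding Vz_def using 2 blk_sub[OF zl] by simp
      moreover have "p = emb (PM b)" using ab 2 by simp
      ultimately show ?thesis by blast
    next
      case 3
      have "PT z \<in> Vz z" unfolding Vz_def using zl by simp
      moreover have "p = emb (PT z)" using 3 by simp
      ultimately show ?thesis by blast
    qed
  qed
  show "emb ` Vz z \<subseteq> SZ z"
  proof
    fix p assume "p \<in> emb ` Vz z"
    then obtain u where u: "u \<in> Vz z" "p = emb u" by blast
    show "p \<in> SZ z"
    proof (cases u)
      case (PL n a)
      have "(e a::'o) < oomega" using e_range by blast
      then show ?thesis using u PL e_NL unfolding mem_SZ Vz_def by auto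
    qed (use u in \<open>auto simp: mem_SZ Vz_def\<close>)
  qed
qed

lemma Vz_V: "Vz z \<subseteq> V" unfolding Vz_def V_def by blast

lemma SZ_Y: "z < l \<Longrightarrow> SZ z \<subseteq> Y l gam" unfolding Y_eq using SZ_emb Vz_V image_mono by metis

end

context constr begin

lemma emb_PM: "valid u \<Longrightarrow> emb u = (gam, y) \<Longrightarrow> u = PM y"
  by (cases u) (auto dest: e_NL_ne)
lemma emb_PT: "valid u \<Longrightarrow> emb u = (osucc gam, y) \<Longrightarrow> u = PT y"
  by (cases u) (auto dest: e_NL_ne)
lemma emb_PL: "valid u \<Longrightarrow> n \<in> NL \<Longrightarrow> emb u = (e n, b) \<Longrightarrow> \<exists>a. u = PL n a \<and> b = e a"
  by (cases u) (auto dest: e_NL_ne)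

lemma Vz_valid: "u \<in> Vz z \<Longrightarrow> valid u" unfolding Vz_def by blast

lemma ipt_Vz: "u \<in> Vz z \<Longrightarrow> v \<in> Vz z \<Longrightarrow> ipt u v \<subseteq> Vz z"
  unfolding ipt_def rootpt_def Vz_def using root_NL by auto

lemma lep_Vz: "lep w v \<Longrightarrow> valid w \<Longrightarrow> v \<in> Vz z \<Longrightarrow> w \<in> Vz z"
  by (cases w; cases v) (auto simp: Vz_def)

lemma in_SZ_emb: "z < l \<Longrightarrow> p \<in> SZ z \<Longrightarrow> \<exists>u\<in>Vz z. p = emb u"
  using SZ_emb by blast

lemma closed_SZ: assumes zl: "z < l" shows "closed_under II (SZ z)"
  unfolding closed_under_def
proof (intro ballI impI)
  fix s t assume s: "s \<in> SZ z" and t: "t \<in> SZ z" and st: "s \<noteq> t"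
  obtain u where u: "u \<in> Vz z" "s = emb u" using in_SZ_emb[OF zl s] by blast
  obtain v where v: "v \<in> Vz z" "t = emb v" using in_SZ_emb[OF zl t] by blast
  have ne: "u \<noteq> v" using st u v by blast
  have "II {s, t} = emb ` ipt u v" using II_emb[OF Vz_valid[OF u(1)] Vz_valid[OF v(1)] ne] u v by simp
  also have "\<dots> \<subseteq> emb ` Vz z" using ipt_Vz[OF u(1) v(1)] by blast
  finally show "II {s, t} \<subseteq> SZ z" using SZ_emb[OF zl] by simp
qed

lemma down_SZ: assumes zl: "z < l" shows "\<forall>p t. LE p t \<and> t \<in> SZ z \<longrightarrow> p \<in> SZ z"
proof (intro allI impI)
  fix p t assume h: "LE p t \<and> t \<in> SZ z"
  obtain w v where wv: "valid w" "valid v" "p = emb w" "t = emb v" "lep w v" using LE_D h by blast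
  obtain v' where v': "v' \<in> Vz z" "t = emb v'" using in_SZ_emb[OF zl] h by blast
  have "v = v'" using emb_inj[OF wv(2) Vz_valid[OF v'(1)]] wv(4) v'(2) by simp
  then have "w \<in> Vz z" using lep_Vz[OF wv(5) wv(1)] v'(1) by simp
  then show "p \<in> SZ z" using SZ_emb[OF zl] wv(3) by blast
qed

lemma blk_ne: "z < l \<Longrightarrow> \<exists>x. x \<in> Iblk z"
  using blk_inf by (metis finite.emptyI ex_in_conv)

lemma fst_SZ: assumes zl: "z < l" shows "fst ` SZ z = {a. a \<le> osucc gam}"
proof
  show "fst ` SZ z \<subseteq> {a. a \<le> osucc gam}"
  proof
    fix a assume "a \<in> fst ` SZ z"
    then obtain u where "u \<in> Vz z" "a = fst (emb u)" using SZ_emb[OF zl] by auto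
    then show "a \<in> {a. a \<le> osucc gam}" using lev_below Vz_valid by blast
  qed
  show "{a. a \<le> osucc gam} \<subseteq> fst ` SZ z"
  proof
    fix a assume a: "a \<in> {a. a \<le> osucc gam}"
    then consider "a < gam" | "a = gam" | "a = osucc gam"
      using below_osucc_gam by (metis mem_Collect_eq order.order_iff_strict)
    then show "a \<in> fst ` SZ z"
    proof cases
      case 1
      have "(ozero::'o) < oomega" using e_range e_0 by (metis rangeI mem_Collect_eq)
      then have "(a, ozero) \<in> SZ z" using 1 unfolding mem_SZ by simp
      then show ?thesis by (metis fst_conv image_eqI)
    next
      case 2
      obtain x where "x \<in> Iblk z" using blk_ne[OF zl] by blast
      then have "(a, x) \<in> SZ z" using 2 unfolding mem_SZ by simp
      then show ?thesis by (metis fst_conv image_eqI)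
    next
      case 3
      then have "(a, z) \<in> SZ z" unfolding mem_SZ by simp
      then show ?thesis by (metis fst_conv image_eqI)
    qed
  qed
qed

lemma LCS_SZ: assumes zl: "z < l" shows "LCS_poset (SZ z) (restr LE (SZ z)) II"
proof (rule LCS_restr[OF LCS_Y SZ_Y[OF zl] closed_SZ[OF zl] down_SZ[OF zl]])
  show "SZ z \<noteq> {}" using fst_SZ[OF zl] by (metis empty_iff image_empty mem_Collect_eq order_refl)
  show "\<forall>a b. b \<in> fst ` SZ z \<and> a < b \<longrightarrow> a \<in> fst ` SZ z" unfolding fst_SZ[OF zl] by auto
qed

end

context constr begin

lemma lev_lt: "a < gam \<Longrightarrow> level (SZ z) a = {a} \<times> {y. y < oomega}"
  unfolding level_def mem_SZ using gam_s by (auto simp: order.strict_iff_order)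

lemma lev_gam: "level (SZ z) gam = {gam} \<times> Iblk z"
  unfolding level_def mem_SZ by auto

lemma lev_top: "level (SZ z) (osucc gam) = {(osucc gam, z)}"
  unfolding level_def mem_SZ using gam_s by auto

lemma levset: "lev_set (SZ z) a = {b. (a, b) \<in> SZ z}" unfolding lev_set_def by simp

lemma omega_countable: "countable {y::'o. y < oomega}" proof -
  have "countable (range (e::nat \<Rightarrow> 'o))" by simp
  then show ?thesis using e_range by simp
qed

lemma blk_countable: "z < l \<Longrightarrow> countable (Iblk z)"
  using countable_eqpoll[OF omega_countable blk_card] by blast

lemma cardseq_SZ: assumes zl: "z < l"
  shows "has_cardseq (SZ z) {a. a \<le> osucc gam} (\<lambda>a. if a \<le> gam then oomega else oone)"
  unfolding has_cardseq_def
proof (intro conjI ballI)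
  show "fst ` SZ z = {a. a \<le> osucc gam}" by (rule fst_SZ[OF zl])
  fix a assume a: "a \<in> {a. a \<le> osucc gam}"
  then consider "a < gam" | "a = gam" | "a = osucc gam"
    using below_osucc_gam by (metis mem_Collect_eq order.order_iff_strict)
  then show "level (SZ z) a \<approx> {y. y < (if a \<le> gam then (oomega::'o) else oone)}"
  proof cases
    case 1
    have "a \<le> gam" using 1 by simp
    have "level (SZ z) a \<approx> {y::'o. y < oomega}"
      apply (subst lev_lt) apply (rule 1)
      apply (rule times_singleton_eqpoll)
      done
    then show ?thesis using \<open>a \<le> gam\<close> by simp
  next
    case 2
    have "{gam} \<times> Iblk z \<approx> Iblk z" by (rule times_singleton_eqpoll)
    then have "{gam} \<times> Iblk z \<approx> {y::'o. y < oomega}" using blk_card[OF zl] eqpoll_trans by blast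
    then show ?thesis unfolding 2 lev_gam by simp
  next
    case 3
    have "\<not> osucc gam \<le> gam" using gam_s by simp
    then show ?thesis unfolding 3 lev_top using one singleton_eqpoll by simp
  qed
qed

lemma II_same_L: assumes n: "n \<in> NL" and ne: "c \<noteq> d"
  shows "II {(e n, e c), (e n, e d)} = {}"
proof -
  have "II {emb (PL n c), emb (PL n d)} = emb ` ipt (PL n c) (PL n d)"
    by (rule II_emb) (use n ne in auto)
  moreover have "ipt (PL n c) (PL n d) = {}"
  proof -
    have "\<not> TL (n, c) (n, d)" using TL_same[of "(n, c)" "(n, d)"] ne by auto
    moreover have "\<not> TL (n, d) (n, c)" using TL_same[of "(n, d)" "(n, c)"] ne by auto
    ultimately show ?thesis unfolding ipt_def by simp
  qed
  ultimately show ?thesis by simp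
qed

lemma II_same_M: assumes zl: "z < l" and x: "x \<in> Iblk z" and y: "y \<in> Iblk z" and ne: "x \<noteq> y"
  shows "II {(gam, x), (gam, y)} = {}"
proof -
  have "II {emb (PM x), emb (PM y)} = emb ` ipt (PM x) (PM y)"
    by (rule II_emb) (use ne blk_sub[OF zl x] blk_sub[OF zl y] in auto)
  moreover have "ipt (PM x) (PM y) = {}"
    unfolding ipt_def using q3[OF zl x y ne] ne by simp
  ultimately show ?thesis by simp
qed

lemma strict_restr_D: "z < l \<Longrightarrow> strict (restr LE (SZ z)) s t \<Longrightarrow>
   \<exists>w v. w \<in> Vz z \<and> v \<in> Vz z \<and> s = emb w \<and> t = emb v \<and> lep w v \<and> w \<noteq> v"
proof -
  assume zl: "z < l" and h: "strict (restr LE (SZ z)) s t"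
  then have sS: "s \<in> SZ z" and tS: "t \<in> SZ z" and le: "LE s t" and ne: "s \<noteq> t"
    unfolding strict_def restr_def by auto
  obtain w where w: "w \<in> Vz z" "s = emb w" using in_SZ_emb[OF zl sS] by blast
  obtain v where v: "v \<in> Vz z" "t = emb v" using in_SZ_emb[OF zl tS] by blast
  have "lep w v" using le w v Vz_valid by simp
  then show ?thesis using w v ne by blast
qed

lemma restr_emb: "z < l \<Longrightarrow> w \<in> Vz z \<Longrightarrow> v \<in> Vz z \<Longrightarrow> lep w v \<Longrightarrow> restr LE (SZ z) (emb w) (emb v)"
  unfolding restr_def using SZ_emb Vz_valid by auto

lemma strict_restr_emb: "z < l \<Longrightarrow> w \<in> Vz z \<Longrightarrow> v \<in> Vz z \<Longrightarrow> lep w v \<Longrightarrow> w \<noteq> v \<Longrightarrow>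
    strict (restr LE (SZ z)) (emb w) (emb v)"
  unfolding strict_def using restr_emb emb_inj Vz_valid by blast

end

context constr begin

lemma lev_set_SZ: "lev_set (SZ z) a \<subseteq> {y. y < oomega} \<union> Iblk z \<union> {z}"
  unfolding lev_set_def mem_SZ by auto

lemma O_countable: "z < l \<Longrightarrow> countable (lev_set (SZ z) a)"
  using lev_set_SZ countable_subset omega_countable blk_countable by (metis countable_Un countable_insert insert_is_Un sup_commute countable_empty)

lemma skel_ii: assumes zl: "z < l" and aL: "a \<le> osucc gam" and saL: "osucc a \<le> osucc gam"
  and t: "t \<in> level (SZ z) (osucc a)" and st: "strict (restr LE (SZ z)) s t"
  shows "\<exists>x\<in>lev_set (SZ z) a. restr LE (SZ z) s (a, x) \<and> strict (restr LE (SZ z)) (a, x) t"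
proof -
  obtain w v where wv: "w \<in> Vz z" "v \<in> Vz z" "s = emb w" "t = emb v" "lep w v" "w \<noteq> v"
    using strict_restr_D[OF zl st] by blast
  have vw: "valid w" "valid v" using wv Vz_valid by auto
  have ft: "fst t = osucc a" using t unfolding level_def by simp
  have sS: "s \<in> SZ z" using st unfolding strict_def restr_def by blast
  have self: "restr LE (SZ z) s s" using restr_emb[OF zl wv(1) wv(1) lep_refl] wv(3) by simp
  consider "a < gam" | "a = gam" | "a = osucc gam"
    using aL below_osucc_gam by (metis order.order_iff_strict)
  then show ?thesis
  proof cases
    case 1
    then obtain n where n: "n \<in> NL" "a = e n" using gam_e by blast
    show ?thesis
    proof (cases "Suc n \<in> NL")
      case True
      have sa: "osucc a = e (Suc n)" using e_succ[OF n(1)] True n by simp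
      obtain b where b: "v = PL (Suc n) b" using emb_PL[OF vw(2) True, of "snd t"] wv(4) ft sa
        by (metis prod.collapse)
      obtain m c where mc: "w = PL m c" using wv(5) b by (cases w) auto
      have TLw: "TL (m, c) (Suc n, b)" using wv(5) b mc by simp
      have "m \<le> Suc n" using TL_lev[OF TLw] by simp
      moreover have "m \<noteq> Suc n" using TL_same[OF TLw] wv(6) b mc by auto
      ultimately have "fst (m, c) \<le> n" by simp
      then obtain a' where a': "TL (m, c) (n, a')" "TL (n, a') (Suc n, b)" using succ_step[OF True TLw] by blast
      have pv: "PL n a' \<in> Vz z" unfolding Vz_def using n by simp
      have "(a, e a') = emb (PL n a')" using n by simp
      moreover have "e a' \<in> lev_set (SZ z) a"
        unfolding lev_set_def mem_SZ using 1 e_range by auto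
      moreover have "restr LE (SZ z) s (emb (PL n a'))"
        using restr_emb[OF zl wv(1) pv] a'(1) mc wv(3) by simp
      moreover have "strict (restr LE (SZ z)) (emb (PL n a')) t"
        using strict_restr_emb[OF zl pv wv(2)] a'(2) b wv(4) by simp
      ultimately show ?thesis by metis
    next
      case False
      have sa: "osucc a = gam" using e_succ[OF n(1)] False n by simp
      have "v = PM (snd t)" using emb_PM[OF vw(2)] wv(4) ft sa by (metis prod.collapse)
      then obtain m c where mc: "w = PL m c" using wv(5,6) by (cases w) auto
      have "m \<in> NL" using vw(1) mc by simp
      then have "m = n" using NL_top[OF n(1) False] by blast
      then have seq: "s = (a, e c)" using wv(3) mc n by simp
      have "e c \<in> lev_set (SZ z) a" using sS seq unfolding lev_set_def by simp
      then show ?thesis using self st seq by metis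
    qed
  next
    case 2
    have "v = PT (snd t)" using emb_PT[OF vw(2)] wv(4) ft 2 by (metis prod.collapse)
    moreover have "snd t = z" using wv(2) calculation unfolding Vz_def by simp
    ultimately have v: "v = PT z" by simp
    show ?thesis
    proof (cases w)
      case (PL m c)
      then have "rt (m, c) \<in> A z" using wv(5) v by simp
      then obtain x where x: "x \<in> Iblk z" "rt (m, c) \<in> Q x" using q4[OF zl] by blast
      have px: "PM x \<in> Vz z" unfolding Vz_def using x blk_sub[OF zl x(1)] by simp
      have "(a, x) = emb (PM x)" using 2 by simp
      moreover have "x \<in> lev_set (SZ z) a" unfolding lev_set_def mem_SZ using 2 x by simp
      moreover have "restr LE (SZ z) s (emb (PM x))"
        using restr_emb[OF zl wv(1) px] x PL wv(3) by simp
      moreover have "strict (restr LE (SZ z)) (emb (PM x)) t"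
        using strict_restr_emb[OF zl px wv(2)] x v wv(4) by simp
      ultimately show ?thesis by metis
    next
      case (PM x)
      then have seq: "s = (a, x)" using wv(3) 2 by simp
      have "x \<in> lev_set (SZ z) a" using sS seq unfolding lev_set_def by simp
      then show ?thesis using self st seq by metis
    next
      case (PT w')
      then show ?thesis using wv(5,6) v by simp
    qed
  next
    case 3
    then show ?thesis using saL gam_ss by simp
  qed
qed

lemma skel_i: assumes zl: "z < l" and aL: "a \<le> osucc gam"
  and x: "x \<in> lev_set (SZ z) a" and y: "y \<in> lev_set (SZ z) a" and ne: "x \<noteq> y"
  shows "II {(a, x), (a, y)} = {}"
proof -
  have xS: "(a, x) \<in> SZ z" and yS: "(a, y) \<in> SZ z" using x y unfolding lev_set_def by auto
  consider "a < gam" | "a = gam" | "a = osucc gam"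
    using aL below_osucc_gam by (metis order.order_iff_strict)
  then show ?thesis
  proof cases
    case 1
    then obtain n where n: "n \<in> NL" "a = e n" using gam_e by blast
    have "x < oomega" "y < oomega" using xS yS 1 gam_s unfolding mem_SZ by auto
    then obtain c d where "x = e c" "y = e d" using e_range by (metis (mono_tags, lifting) imageE mem_Collect_eq)
    then show ?thesis using II_same_L[OF n(1)] ne n by auto
  next
    case 2
    have "x \<in> Iblk z" "y \<in> Iblk z" using xS yS 2 unfolding mem_SZ by auto
    then show ?thesis using II_same_M[OF zl] ne 2 by simp
  next
    case 3
    have "x = z" "y = z" using xS yS 3 gam_s unfolding mem_SZ by auto
    then show ?thesis using ne by simp
  qed
qed

lemma skeleton_SZ: assumes zl: "z < l"
  shows "skeleton {a. a \<le> osucc gam} (\<lambda>a. if a \<le> gam then oomega else oone) (SZ z) (restr LE (SZ z)) II"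
  unfolding skeleton_def
proof (intro conjI ballI)
  show "LCS_poset (SZ z) (restr LE (SZ z)) II" by (rule LCS_SZ[OF zl])
  show "has_cardseq (SZ z) {a. a \<le> osucc gam} (\<lambda>a. if a \<le> gam then oomega else oone)" by (rule cardseq_SZ[OF zl])
  fix a assume aL: "a \<in> {a. a \<le> osucc gam}"
  show "\<exists>Oa\<subseteq>lev_set (SZ z) a. countable Oa \<and>
          (\<forall>s t. strict (restr LE (SZ z)) s t \<and> fst s = a \<longrightarrow> snd s \<in> Oa) \<and>
          (\<forall>x\<in>Oa. \<forall>y\<in>Oa. x \<noteq> y \<longrightarrow> II {(a, x), (a, y)} = {}) \<and>
          (osucc a \<in> {a. a \<le> osucc gam} \<longrightarrow>
           (\<forall>t\<in>level (SZ z) (osucc a). \<forall>s. strict (restr LE (SZ z)) s t \<longrightarrow>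
               (\<exists>x\<in>Oa. restr LE (SZ z) s (a, x) \<and> strict (restr LE (SZ z)) (a, x) t)))"
  proof (rule exI[of _ "lev_set (SZ z) a"], intro conjI)
    show "lev_set (SZ z) a \<subseteq> lev_set (SZ z) a" by simp
    show "countable (lev_set (SZ z) a)" by (rule O_countable[OF zl])
    show "\<forall>s t. strict (restr LE (SZ z)) s t \<and> fst s = a \<longrightarrow> snd s \<in> lev_set (SZ z) a"
      unfolding strict_def restr_def lev_set_def by (metis mem_Collect_eq prod.collapse)
    show "\<forall>x\<in>lev_set (SZ z) a. \<forall>y\<in>lev_set (SZ z) a. x \<noteq> y \<longrightarrow> II {(a, x), (a, y)} = {}"
      using skel_i[OF zl] aL by blast
    show "osucc a \<in> {a. a \<le> osucc gam} \<longrightarrow>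
           (\<forall>t\<in>level (SZ z) (osucc a). \<forall>s. strict (restr LE (SZ z)) s t \<longrightarrow>
               (\<exists>x\<in>lev_set (SZ z) a. restr LE (SZ z) s (a, x) \<and> strict (restr LE (SZ z)) (a, x) t))"
      using skel_ii[OF zl] aL by blast
  qed
qed

theorem adequate_gam: "adequate l gam LE II"
  unfolding adequate_def
proof (intro conjI allI impI)
  show "LCS_poset (Y l gam) LE II" by (rule LCS_Y)
  fix z assume zl: "z < l"
  show "closed_under II (BS gam \<union> Bz gam z)" using closed_SZ[OF zl] unfolding SZ_def .
  show "skeleton {a. a \<le> osucc gam} (\<lambda>a. if a \<le> gam then oomega else oone)
          (BS gam \<union> Bz gam z) (restr LE (BS gam \<union> Bz gam z)) II"
    using skeleton_SZ[OF zl] unfolding SZ_def .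
  show "\<forall>x\<in>Bz gam z. fst x = gam \<longrightarrow>
           strict LE x (osucc gam, z) \<and> (\<forall>w. w \<noteq> z \<longrightarrow> \<not> strict LE x (osucc gam, w))"
  proof (intro ballI impI)
    fix x assume xB: "x \<in> Bz gam z" and fx: "fst x = gam"
    have "x \<noteq> (osucc gam, z)"
    proof
      assume "x = (osucc gam, z)"
      then have "fst x = osucc gam" by simp
      then show False using fx gam_ne by simp
    qed
    then have "x \<in> {(gam, x) | x. omega_mult z \<le> x \<and> x < omega_mult (osucc z)}" using xB unfolding Bz_def by blast
    then obtain y where xy: "x = (gam, y)" and y: "y \<in> Iblk z"
      unfolding Iblk_def by blast
    have yl: "y < l" using blk_sub[OF zl y] .
    have "LE (emb (PM y)) (emb (PT z))" using LE_emb[of "PM y" "PT z"] y yl zl by simp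
    then have s1: "strict LE x (osucc gam, z)" unfolding strict_def using xy by simp
    have s2: "\<not> strict LE x (osucc gam, w)" if wz: "w \<noteq> z" for w
    proof
      assume "strict LE x (osucc gam, w)"
      then have "LE x (osucc gam, w)" unfolding strict_def by blast
      then obtain u v where uv: "valid u" "valid v" "x = emb u" "(osucc gam, w) = emb v" "lep u v"
        using LE_D by blast
      have "u = PM y" using emb_PM[OF uv(1)] uv(3) xy by simp
      moreover have "v = PT w" using emb_PT[OF uv(2)] uv(4) by simp
      ultimately have "y \<in> Iblk w" "w < l" using uv by auto
      then show False using blk_disj[OF zl \<open>w < l\<close>] wz y by auto
    qed
    show "strict LE x (osucc gam, z) \<and> (\<forall>w. w \<noteq> z \<longrightarrow> \<not> strict LE x (osucc gam, w))"
      using s1 s2 by blast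
  qed
qed

end

definition par :: "nat \<Rightarrow> nat" where "par a = fst (prod_decode (a - 1))"

lemma par_less: "a \<noteq> 0 \<Longrightarrow> par a < a"
proof -
  assume "a \<noteq> 0"
  have "fst (prod_decode (a - 1)) \<le> prod_encode (prod_decode (a - 1))"
    by (metis le_prod_encode_1 prod.collapse)
  then show "par a < a" unfolding par_def using \<open>a \<noteq> 0\<close> by simp
qed

lemma par_code: "par (Suc (prod_encode (c, k))) = c" unfolding par_def by simp

fun climb :: "nat \<Rightarrow> nat \<Rightarrow> nat option" where
  "climb 0 a = Some a"
| "climb (Suc d) a = (if a = 0 then None else climb d (par a))"

function rtw :: "nat \<Rightarrow> nat \<Rightarrow> nat" where
  "rtw n a = (if a = 0 then n else rtw (Suc n) (par a))"
  by auto
termination by (relation "measure snd") (auto simp: par_less)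

declare rtw.simps[simp del]

definition TLw :: "nat \<times> nat \<Rightarrow> nat \<times> nat \<Rightarrow> bool" where
  "TLw u v \<longleftrightarrow> fst u \<le> fst v \<and> climb (fst v - fst u) (snd u) = Some (snd v)"

definition rtt :: "nat \<times> nat \<Rightarrow> nat" where "rtt u = rtw (fst u) (snd u)"

lemma climb_add: "climb (d1 + d2) a = (case climb d1 a of None \<Rightarrow> None | Some b \<Rightarrow> climb d2 b)"
  by (induction d1 arbitrary: a) auto

lemma climb_rt: "climb d a = Some b \<Longrightarrow> rtw n a = rtw (n + d) b"
proof (induction d arbitrary: n a)
  case 0 then show ?case by simp
next
  case (Suc d)
  then have a0: "a \<noteq> 0" and c: "climb d (par a) = Some b" by (auto split: if_splits)
  have "rtw n a = rtw (Suc n) (par a)" using a0 by (simp add: rtw.simps)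
  also have "\<dots> = rtw (Suc n + d) b" using Suc.IH[OF c] .
  finally show ?case by simp
qed

lemma root_climb: "n \<le> rtw n a \<and> climb (rtw n a - n) a = Some 0"
proof (induction n a rule: rtw.induct)
  case (1 n a)
  show ?case
  proof (cases "a = 0")
    case True then show ?thesis by (simp add: rtw.simps)
  next
    case False
    then have eq: "rtw n a = rtw (Suc n) (par a)" by (simp add: rtw.simps)
    have IH: "Suc n \<le> rtw (Suc n) (par a) \<and> climb (rtw (Suc n) (par a) - Suc n) (par a) = Some 0"
      using 1 False by blast
    have "rtw (Suc n) (par a) - n = Suc (rtw (Suc n) (par a) - Suc n)" using IH[THEN conjunct1] by linarith
    then show ?thesis unfolding eq using IH False by simp
  qed
qed

lemma climb_ne: "\<exists>a. climb d a = Some b"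
proof (induction d)
  case 0 then show ?case by simp
next
  case (Suc d)
  then obtain c where "climb d c = Some b" by blast
  then have "climb (Suc d) (Suc (prod_encode (c, 0))) = Some b" by (simp add: par_code)
  then show ?case by blast
qed

lemma climb_inf: "infinite {a. climb (Suc d) a = Some b}"
proof -
  obtain c where c: "climb d c = Some b" using climb_ne by blast
  have "range (\<lambda>k. Suc (prod_encode (c, k))) \<subseteq> {a. climb (Suc d) a = Some b}"
    using c by (auto simp: par_code)
  moreover have "inj (\<lambda>k. Suc (prod_encode (c, k)))" by (simp add: inj_def)
  ultimately show ?thesis using range_inj_infinite finite_subset by blast
qed

lemma climb_inf': "0 < d \<Longrightarrow> infinite {a. climb d a = Some b}"
  using climb_inf[of "d - 1" b] by simp

lemma TLw_refl: "TLw u u" unfolding TLw_def by simp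

lemma TLw_antisym: "TLw u v \<Longrightarrow> TLw v u \<Longrightarrow> u = v"
  unfolding TLw_def by (simp add: prod_eq_iff)

lemma TLw_trans: "TLw u v \<Longrightarrow> TLw v w \<Longrightarrow> TLw u w"
proof -
  assume uv: "TLw u v" and vw: "TLw v w"
  have "fst w - fst u = (fst v - fst u) + (fst w - fst v)" using uv vw unfolding TLw_def by simp
  then show "TLw u w" using uv vw climb_add[of "fst v - fst u" "fst w - fst v" "snd u"]
    unfolding TLw_def by simp
qed

lemma TLw_lev: "TLw u v \<Longrightarrow> fst u \<le> fst v" unfolding TLw_def by simp

lemma TLw_same: "TLw u v \<Longrightarrow> fst u = fst v \<Longrightarrow> u = v" unfolding TLw_def by (simp add: prod_eq_iff)

lemma TLw_rt: "TLw u v \<Longrightarrow> rtt u = rtt v"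
  unfolding TLw_def rtt_def using climb_rt by fastforce

lemma rootw_top: "TLw u (rtt u, 0)"
  unfolding TLw_def rtt_def using root_climb by simp

lemma rootw_rt: "rtt (j, 0) = j" unfolding rtt_def by (simp add: rtw.simps)

lemma TLw_tree: "TLw w u \<Longrightarrow> TLw w v \<Longrightarrow> TLw u v \<or> TLw v u"
proof -
  assume wu: "TLw w u" and wv: "TLw w v"
  have gen: "TLw u' v'" if "TLw w u'" "TLw w v'" "fst u' \<le> fst v'" for u' v'
  proof -
    have "fst v' - fst w = (fst u' - fst w) + (fst v' - fst u')" using that unfolding TLw_def by simp
    then show ?thesis using that climb_add[of "fst u' - fst w" "fst v' - fst u'" "snd w"]
      unfolding TLw_def by simp
  qed
  show ?thesis using gen[OF wu wv] gen[OF wv wu] by linarith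
qed

lemma fiberw_inf: "infinite S \<Longrightarrow> infinite {a. rtt (n, a) \<in> S}"
proof -
  assume S: "infinite S"
  obtain j where j: "j \<in> S" "n < j" using S by (meson finite_nat_set_iff_bounded_le not_le)
  have "{a. climb (j - n) a = Some 0} \<subseteq> {a. rtt (n, a) \<in> S}"
  proof
    fix a assume "a \<in> {a. climb (j - n) a = Some 0}"
    then have "rtw n a = rtw (n + (j - n)) 0" using climb_rt by auto
    then have "rtt (n, a) = j" using j by (simp add: rtt_def rtw.simps)
    then show "a \<in> {a. rtt (n, a) \<in> S}" using j by simp
  qed
  then show ?thesis using climb_inf'[of "j - n" 0] j finite_subset by auto
qed

lemma belowsw_inf: "n < m \<Longrightarrow> infinite {a. TLw (n, a) (m, b)}"
  unfolding TLw_def using climb_inf'[of "m - n" b] by simp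

lemma succw_step: "TLw u (Suc m, b) \<Longrightarrow> fst u \<le> m \<Longrightarrow> \<exists>a. TLw u (m, a) \<and> TLw (m, a) (Suc m, b)"
proof -
  assume h: "TLw u (Suc m, b)" and um: "fst u \<le> m"
  have eq: "Suc m - fst u = (m - fst u) + 1" using um by simp
  have "climb ((m - fst u) + 1) (snd u) = Some b" using h eq unfolding TLw_def by simp
  then obtain a where a: "climb (m - fst u) (snd u) = Some a" "climb 1 a = Some b"
    using climb_add[of "m - fst u" 1 "snd u"] by (auto split: option.splits)
  then show ?thesis unfolding TLw_def using um by auto
qed


context hyp begin

lemma e_range': "range (e::nat \<Rightarrow> 'o) = {y. y < oomega}" using omega_facts[OF uncU] by simp

lemma oomega_l: "(oomega::'o) < l"
proof (rule ccontr)
  assume "\<not> oomega < l"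
  then have "{y. y < l} \<subseteq> {y. y < (oomega::'o)}" by auto
  moreover have "countable (range (e::nat \<Rightarrow> 'o))" by simp
  ultimately show False using unc e_range' countable_subset by metis
qed

lemma osucc_oomega_l: "osucc (oomega::'o) < l"
proof (rule ccontr)
  assume "\<not> osucc oomega < l"
  then have lo: "l \<le> osucc oomega" by simp
  have "{y. y < l} \<subseteq> insert oomega {y. y < (oomega::'o)}"
  proof
    fix y assume "y \<in> {y. y < l}"
    then have "y < osucc oomega" using lo by simp
    then have "y \<le> oomega" using less_osucc[OF oomega_l] by blast
    then show "y \<in> insert oomega {y. y < (oomega::'o)}" by (auto simp: order.order_iff_strict)
  qed
  moreover have "countable (insert oomega (range (e::nat \<Rightarrow> 'o)))" by simp
  ultimately show False using unc e_range' countable_subset by metis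
qed

lemma e_lt_l: "(e n :: 'o) < l" using e_range' oomega_l by (metis (mono_tags) mem_Collect_eq order.strict_trans rangeI)

lemma one_set: "{y::'o. y < oone} = {ozero}"
proof -
  have z1: "ozero < osucc (ozero::'o)" using osucc_gt[OF e_lt_l[of 0]] by simp
  show ?thesis unfolding oone_def
  proof
    show "{y::'o. y < osucc ozero} \<subseteq> {ozero}" using less_osucc[OF e_lt_l[of 0]] ozero_le
      by (auto simp: order.antisym)
    show "{ozero} \<subseteq> {y::'o. y < osucc ozero}" using z1 by simp
  qed
qed

lemma oone_e: "(oone::'o) = e 1" unfolding oone_def by (simp add: e_Suc)

lemma l_pos: "(ozero::'o) < l" using e_lt_l[of 0] by simp

lemma constr_omega: "constr l oomega UNIV TLw rtt (\<lambda>j. (j, 0)) Qx Fz"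
proof (unfold_locales)
  show "strict_mono (e::nat \<Rightarrow> 'o)" by (rule e_strict_mono[OF uncU])
  show "range (e::nat \<Rightarrow> 'o) = {y. y < oomega}" by (rule e_range')
  show "{a. a < (oomega::'o)} = e ` UNIV" using e_range' by simp
  show "oomega < osucc (oomega::'o)" using osucc_gt[OF oomega_l] .
  show "osucc oomega < osucc (osucc (oomega::'o))" using osucc_gt[OF osucc_oomega_l] .
  show "\<And>n. n \<in> UNIV \<Longrightarrow> osucc (e n) = (if Suc n \<in> UNIV then e (Suc n) else (oomega::'o))"
    by (simp add: e_Suc)
  show "0 \<in> (UNIV::nat set)" by simp
  show "\<And>n m. n \<in> UNIV \<Longrightarrow> Suc n \<notin> UNIV \<Longrightarrow> m \<in> UNIV \<Longrightarrow> m = n" by simp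
  show "ozero < l" by (rule l_pos)
  show "{y::'o. y < oone} = {ozero}" by (rule one_set)
  show "\<And>u. TLw u u" by (rule TLw_refl)
  show "\<And>u v. TLw u v \<Longrightarrow> TLw v u \<Longrightarrow> u = v" by (rule TLw_antisym)
  show "\<And>u v w. TLw u v \<Longrightarrow> TLw v w \<Longrightarrow> TLw u w" by (rule TLw_trans)
  show "\<And>u v. TLw u v \<Longrightarrow> fst u \<le> fst v" by (rule TLw_lev)
  show "\<And>u v. TLw u v \<Longrightarrow> fst u = fst v \<Longrightarrow> u = v" by (rule TLw_same)
  show "\<And>u v. TLw u v \<Longrightarrow> rtt u = rtt v" by (rule TLw_rt)
  show "\<And>u v. TLw u v \<Longrightarrow> fst v \<in> UNIV \<Longrightarrow> fst u \<in> UNIV" by simp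
  show "\<And>j. fst (j, 0::nat) \<in> UNIV" by simp
  show "\<And>j. rtt (j, 0) = j" by (rule rootw_rt)
  show "\<And>u. fst u \<in> UNIV \<Longrightarrow> TLw u (rtt u, 0)" by (rule rootw_top)
  show "\<And>w u v. TLw w u \<Longrightarrow> TLw w v \<Longrightarrow> TLw u v \<or> TLw v u" by (rule TLw_tree)
  show "\<And>n S. n \<in> UNIV \<Longrightarrow> infinite S \<Longrightarrow> infinite {a. rtt (n, a) \<in> S}" by (rule fiberw_inf)
  show "\<And>m n b. m \<in> UNIV \<Longrightarrow> n < m \<Longrightarrow> infinite {a. TLw (n, a) (m, b)}" by (rule belowsw_inf)
  show "\<And>m u b. Suc m \<in> UNIV \<Longrightarrow> TLw u (Suc m, b) \<Longrightarrow> fst u \<le> m \<Longrightarrow> \<exists>a. TLw u (m, a) \<and> TLw (m, a) (Suc m, b)"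
    by (rule succw_step)
  show "\<And>z x. z < l \<Longrightarrow> x \<in> Iblk z \<Longrightarrow> x < l" by (rule blk_sub)
  show "\<And>z. z < l \<Longrightarrow> Iblk z \<approx> {y::'o. y < oomega}" by (rule blk_card)
  show "\<And>z. z < l \<Longrightarrow> infinite (Iblk z)" by (rule blk_inf)
  show "\<And>z z'. z < l \<Longrightarrow> z' < l \<Longrightarrow> z \<noteq> z' \<Longrightarrow> Iblk z \<inter> Iblk z' = {}" by (rule blk_disj)
  show "\<And>x. x < l \<Longrightarrow> infinite (Qx x)" by (rule Q_inf)
  show "\<And>x y. x < l \<Longrightarrow> y < l \<Longrightarrow> x \<noteq> y \<Longrightarrow> finite (Qx x \<inter> Qx y)" by (rule Q_fin)
  show "\<And>z x y. z < l \<Longrightarrow> x \<in> Iblk z \<Longrightarrow> y \<in> Iblk z \<Longrightarrow> x \<noteq> y \<Longrightarrow> Qx x \<inter> Qx y = {}" by (rule Q_disj)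
  show "\<And>z. z < l \<Longrightarrow> Fz z = \<Union> (Qx ` Iblk z)" by (rule A_union)
  show "\<And>z z'. z < l \<Longrightarrow> z' < l \<Longrightarrow> z \<noteq> z' \<Longrightarrow> finite (Fz z \<inter> Fz z')" by (rule Ffin)
  show "\<And>z x. z < l \<Longrightarrow> x < l \<Longrightarrow> x \<notin> Iblk z \<Longrightarrow> finite (Fz z \<inter> Qx x)" by (rule AQ_fin)
qed

lemma constr_one: "constr l oone {0} (=) snd (\<lambda>j. (0, j)) Qx Fz"
proof (unfold_locales)
  show "strict_mono (e::nat \<Rightarrow> 'o)" by (rule e_strict_mono[OF uncU])
  show "range (e::nat \<Rightarrow> 'o) = {y. y < oomega}" by (rule e_range')
  show "{a. a < (oone::'o)} = e ` {0}" using one_set by simp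
  show "oone < osucc (oone::'o)" unfolding oone_e using osucc_gt[OF e_lt_l[of 1]] .
  have h: "osucc (oone::'o) = e 2" unfolding oone_e numeral_2_eq_2 by (simp add: e_Suc)
  show "osucc oone < osucc (osucc (oone::'o))" unfolding h using osucc_gt[OF e_lt_l[of 2]] .
  show "\<And>n. n \<in> {0} \<Longrightarrow> osucc (e n) = (if Suc n \<in> {0} then e (Suc n) else (oone::'o))"
    by (simp add: oone_def)
  show "0 \<in> {0::nat}" by simp
  show "\<And>n m. n \<in> {0::nat} \<Longrightarrow> Suc n \<notin> {0} \<Longrightarrow> m \<in> {0} \<Longrightarrow> m = n" by simp
  show "ozero < l" by (rule l_pos)
  show "{y::'o. y < oone} = {ozero}" by (rule one_set)
  show "\<And>u::nat\<times>nat. u = u" by simp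
  show "\<And>u v::nat\<times>nat. u = v \<Longrightarrow> v = u \<Longrightarrow> u = v" by simp
  show "\<And>u v w::nat\<times>nat. u = v \<Longrightarrow> v = w \<Longrightarrow> u = w" by simp
  show "\<And>u v::nat\<times>nat. u = v \<Longrightarrow> fst u \<le> fst v" by simp
  show "\<And>u v::nat\<times>nat. u = v \<Longrightarrow> fst u = fst v \<Longrightarrow> u = v" by simp
  show "\<And>u v::nat\<times>nat. u = v \<Longrightarrow> snd u = snd v" by simp
  show "\<And>u v::nat\<times>nat. u = v \<Longrightarrow> fst v \<in> {0} \<Longrightarrow> fst u \<in> {0}" by simp
  show "\<And>j. fst (0::nat, j::nat) \<in> {0}" by simp
  show "\<And>j. snd (0::nat, j::nat) = j" by simp
  show "\<And>u::nat\<times>nat. fst u \<in> {0} \<Longrightarrow> u = (0, snd u)" by (auto simp: prod_eq_iff)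
  show "\<And>w u v::nat\<times>nat. w = u \<Longrightarrow> w = v \<Longrightarrow> u = v \<or> v = u" by simp
  show "\<And>n S. n \<in> {0::nat} \<Longrightarrow> infinite S \<Longrightarrow> infinite {a. snd (n, a) \<in> S}" by simp
  show "\<And>m n b. m \<in> {0::nat} \<Longrightarrow> n < m \<Longrightarrow> infinite {a. (n, a) = (m, b)}" by simp
  show "\<And>m u b. Suc m \<in> {0::nat} \<Longrightarrow> u = (Suc m, b) \<Longrightarrow> fst u \<le> m \<Longrightarrow> \<exists>a. u = (m, a) \<and> (m, a) = (Suc m, b)"
    by simp
  show "\<And>z x. z < l \<Longrightarrow> x \<in> Iblk z \<Longrightarrow> x < l" by (rule blk_sub)
  show "\<And>z. z < l \<Longrightarrow> Iblk z \<approx> {y::'o. y < oomega}" by (rule blk_card)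
  show "\<And>z. z < l \<Longrightarrow> infinite (Iblk z)" by (rule blk_inf)
  show "\<And>z z'. z < l \<Longrightarrow> z' < l \<Longrightarrow> z \<noteq> z' \<Longrightarrow> Iblk z \<inter> Iblk z' = {}" by (rule blk_disj)
  show "\<And>x. x < l \<Longrightarrow> infinite (Qx x)" by (rule Q_inf)
  show "\<And>x y. x < l \<Longrightarrow> y < l \<Longrightarrow> x \<noteq> y \<Longrightarrow> finite (Qx x \<inter> Qx y)" by (rule Q_fin)
  show "\<And>z x y. z < l \<Longrightarrow> x \<in> Iblk z \<Longrightarrow> y \<in> Iblk z \<Longrightarrow> x \<noteq> y \<Longrightarrow> Qx x \<inter> Qx y = {}" by (rule Q_disj)
  show "\<And>z. z < l \<Longrightarrow> Fz z = \<Union> (Qx ` Iblk z)" by (rule A_union)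
  show "\<And>z z'. z < l \<Longrightarrow> z' < l \<Longrightarrow> z \<noteq> z' \<Longrightarrow> finite (Fz z \<inter> Fz z')" by (rule Ffin)
  show "\<And>z x. z < l \<Longrightarrow> x < l \<Longrightarrow> x \<notin> Iblk z \<Longrightarrow> finite (Fz z \<inter> Qx x)" by (rule AQ_fin)
qed

lemma result: "(\<exists>le i. adequate l (oomega :: 'o) le i) \<and> (\<exists>le i. adequate l (oone :: 'o) le i)"
  using constr.adequate_gam[OF constr_omega] constr.adequate_gam[OF constr_one] by blast

end

theorem proposition3p5:
  fixes l :: "'o::wellorder"
  assumes "uncountable_cardinal l"
    and "\<exists>x. l < x"
    and "\<exists>le i. adequate l (oomega1 :: 'o) le i"
  shows "(\<exists>le i. adequate l (oomega :: 'o) le i) \<and> (\<exists>le i. adequate l (oone :: 'o) le i)"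
proof -
  obtain le i where "adequate l (oomega1 :: 'o) le i" using assms(3) by blast
  then interpret hyp l le i using assms(1,2) by unfold_locales
  show ?thesis by (rule result)
qed


end
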